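(* Let $(X,\sigma)$ be a nondegenerate symplectic space and $\mathcal{R}(X,\sigma)$ its resolvent algebra. For all $\lambda\in\mathbb{R}\setminus\{0\}$ and $f\in X\setminus\{0\}$, the closed two-sided ideal generated by $R(\lambda,f)$ satisfies $$[R(\lambda,f)\mathcal{R}(X,\sigma)]=[\mathcal{R}(X,\sigma)R(\lambda,f)]=[\mathcal{R}(X,\sigma)R(\lambda,f)\mathcal{R}(X,\sigma)],$$ and this ideal is proper. Moreover, for distinct $f_1,\dots,f_n\in X\setminus\{0\}$ and $\lambda_1,\dots,\lambda_n\in\mathbb{R}\setminus\{0\}$, the intersection of the ideals $[R(\lambda_i,f_i)\mathcal{R}(X,\sigma)]$, $i=1,\dots,n$, equals $[R(\lambda_1,f_1)\cdots R(\lambda_n,f_n)\mathcal{R}(X,\sigma)]$.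
   Context: $[\,\cdot\,]$ denotes the closed linear span. The resolvent algebra: let $\mathcal{R}_0$ be the universal unital $*$-algebra generated by $R(\lambda,f)$, $\lambda\in\mathbb{R}\setminus\{0\}$, $f\in X$, subject to (for all $\lambda,\mu,\nu\neq0$, $f,g\in X$): $R(\lambda,0)=-\frac{i}{\lambda}\mathbb{1}$; $R(\lambda,f)^*=R(-\lambda,f)$; $\nu R(\nu\lambda,\nu f)=R(\lambda,f)$; $R(\lambda,f)-R(\mu,f)=i(\mu-\lambda)R(\lambda,f)R(\mu,f)$; $[R(\lambda,f),R(\mu,g)]=i\sigma(f,g)R(\lambda,f)R(\mu,g)^2R(\lambda,f)$; and, for $\lambda+\mu\neq0$, $R(\lambda,f)R(\mu,g)=R(\lambda+\mu,f+g)[R(\lambda,f)+R(\mu,g)+i\sigma(f,g)R(\lambda,f)^2R(\mu,g)]$. $\mathcal{R}(X,\sigma)$ is the C*-algebra obtained by factoring $\mathcal{R}_0$ by the kernel of the enveloping C*-seminorm $\|A\|=\sup_\omega\omega(A^*A)^{1/2}$ (over normalized positive functionals) and completing. *)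

theory Defs
  imports Complex_Main
begin

definition symplectic_form :: "('a::real_vector \<Rightarrow> 'a \<Rightarrow> real) \<Rightarrow> bool" where
  "symplectic_form \<sigma> \<longleftrightarrow>
     (\<forall>f g h. \<sigma> (f + g) h = \<sigma> f h + \<sigma> g h) \<and>
     (\<forall>c f g. \<sigma> (c *\<^sub>R f) g = c * \<sigma> f g) \<and>
     (\<forall>f g. \<sigma> f g = - \<sigma> g f) \<and>
     (\<forall>f. (\<forall>g. \<sigma> f g = 0) \<longrightarrow> f = 0)"

text \<open>Elements are finitely supported complex functions on words in the letters
  (lambda, f) with lambda \<noteq> 0 (noncommutative polynomials).  The involution is the
  one fixed by R(lambda,f)^* = R(-lambda,f).\<close>

type_synonym 'a rword = "(real \<times> 'a) list"
type_synonym 'a ralg = "'a rword \<Rightarrow> complex"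

definition fa_carrier :: "'a ralg set" where
  "fa_carrier = {p. finite {w. p w \<noteq> 0} \<and> (\<forall>w. p w \<noteq> 0 \<longrightarrow> (\<forall>x\<in>set w. fst x \<noteq> 0))}"

definition fa_zero :: "'a ralg" where "fa_zero = (\<lambda>w. 0)"
definition fa_unit :: "'a ralg" where "fa_unit = (\<lambda>w. if w = [] then 1 else 0)"
definition fa_gen :: "real \<Rightarrow> 'a \<Rightarrow> 'a ralg" where
  "fa_gen l f = (\<lambda>w. if w = [(l, f)] then 1 else 0)"
definition fa_add :: "'a ralg \<Rightarrow> 'a ralg \<Rightarrow> 'a ralg" where
  "fa_add p q = (\<lambda>w. p w + q w)"
definition fa_diff :: "'a ralg \<Rightarrow> 'a ralg \<Rightarrow> 'a ralg" where
  "fa_diff p q = (\<lambda>w. p w - q w)"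
definition fa_scale :: "complex \<Rightarrow> 'a ralg \<Rightarrow> 'a ralg" where
  "fa_scale c p = (\<lambda>w. c * p w)"
definition fa_mult :: "'a ralg \<Rightarrow> 'a ralg \<Rightarrow> 'a ralg" where
  "fa_mult p q = (\<lambda>w. \<Sum>i\<le>length w. p (take i w) * q (drop i w))"
definition fa_star :: "'a ralg \<Rightarrow> 'a ralg" where
  "fa_star p = (\<lambda>w. cnj (p (rev (map (\<lambda>(l, f). (- l, f)) w))))"

definition fa_prod :: "'a ralg list \<Rightarrow> 'a ralg" where
  "fa_prod xs = foldr fa_mult xs fa_unit"

inductive_set fa_span :: "'a ralg set \<Rightarrow> 'a ralg set" for S where
  span_zero: "fa_zero \<in> fa_span S"
| span_step: "a \<in> S \<Longrightarrow> p \<in> fa_span S \<Longrightarrow> fa_add (fa_scale c a) p \<in> fa_span S"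

section \<open>Defining relations of the resolvent algebra (as elements lhs - rhs)\<close>

definition resolvent_rels :: "('a::real_vector \<Rightarrow> 'a \<Rightarrow> real) \<Rightarrow> 'a ralg set" where
  "resolvent_rels \<sigma> =
     {fa_diff (fa_gen l 0) (fa_scale (- \<i> / complex_of_real l) fa_unit) | l. l \<noteq> 0}
   \<union> {fa_diff (fa_scale (complex_of_real \<nu>) (fa_gen (\<nu> * l) (\<nu> *\<^sub>R f))) (fa_gen l f)
        | \<nu> l f. \<nu> \<noteq> 0 \<and> l \<noteq> 0}
   \<union> {fa_diff (fa_diff (fa_gen l f) (fa_gen m f))
        (fa_scale (\<i> * complex_of_real (m - l)) (fa_mult (fa_gen l f) (fa_gen m f)))
        | l m f. l \<noteq> 0 \<and> m \<noteq> 0}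
   \<union> {fa_diff (fa_diff (fa_mult (fa_gen l f) (fa_gen m g)) (fa_mult (fa_gen m g) (fa_gen l f)))
        (fa_scale (\<i> * complex_of_real (\<sigma> f g))
          (fa_mult (fa_mult (fa_mult (fa_gen l f) (fa_gen m g)) (fa_gen m g)) (fa_gen l f)))
        | l m f g. l \<noteq> 0 \<and> m \<noteq> 0}
   \<union> {fa_diff (fa_mult (fa_gen l f) (fa_gen m g))
        (fa_mult (fa_gen (l + m) (f + g))
          (fa_add (fa_add (fa_gen l f) (fa_gen m g))
            (fa_scale (\<i> * complex_of_real (\<sigma> f g))
               (fa_mult (fa_mult (fa_gen l f) (fa_gen l f)) (fa_gen m g)))))
        | l m f g. l \<noteq> 0 \<and> m \<noteq> 0 \<and> l + m \<noteq> 0}"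

definition resolvent_state :: "('a::real_vector \<Rightarrow> 'a \<Rightarrow> real) \<Rightarrow> ('a ralg \<Rightarrow> complex) \<Rightarrow> bool" where
  "resolvent_state \<sigma> \<omega> \<longleftrightarrow>
     (\<forall>p\<in>fa_carrier. \<forall>q\<in>fa_carrier. \<omega> (fa_add p q) = \<omega> p + \<omega> q) \<and>
     (\<forall>c. \<forall>p\<in>fa_carrier. \<omega> (fa_scale c p) = c * \<omega> p) \<and>
     \<omega> fa_unit = 1 \<and>
     (\<forall>p\<in>fa_carrier. Im (\<omega> (fa_mult (fa_star p) p)) = 0 \<and> 0 \<le> Re (\<omega> (fa_mult (fa_star p) p))) \<and>
     (\<forall>a\<in>fa_carrier. \<forall>b\<in>fa_carrier. \<forall>r\<in>resolvent_rels \<sigma>. \<omega> (fa_mult (fa_mult a r) b) = 0)"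

definition resolvent_seminorm :: "('a::real_vector \<Rightarrow> 'a \<Rightarrow> real) \<Rightarrow> 'a ralg \<Rightarrow> real" where
  "resolvent_seminorm \<sigma> A =
     Sup ((\<lambda>\<omega>. sqrt (Re (\<omega> (fa_mult (fa_star A) A)))) ` {\<omega>. resolvent_state \<sigma> \<omega>})"

section \<open>The C*-algebra R(X,sigma) as the completion: elements are represented by
  seminorm-Cauchy sequences in R_0\<close>

definition res_cauchy :: "('a::real_vector \<Rightarrow> 'a \<Rightarrow> real) \<Rightarrow> (nat \<Rightarrow> 'a ralg) \<Rightarrow> bool" where
  "res_cauchy \<sigma> s \<longleftrightarrow> (\<forall>n. s n \<in> fa_carrier) \<and>
     (\<forall>\<epsilon>>0. \<exists>M. \<forall>m\<ge>M. \<forall>n\<ge>M. resolvent_seminorm \<sigma> (fa_diff (s m) (s n)) < \<epsilon>)"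

text \<open>The element represented by s lies in the norm closure (in R(X,sigma)) of S \<subseteq> R_0.\<close>

definition res_in_closure :: "('a::real_vector \<Rightarrow> 'a \<Rightarrow> real) \<Rightarrow> (nat \<Rightarrow> 'a ralg) \<Rightarrow> 'a ralg set \<Rightarrow> bool" where
  "res_in_closure \<sigma> s S \<longleftrightarrow>
     (\<forall>\<epsilon>>0. \<exists>a\<in>S. \<exists>M. \<forall>n\<ge>M. resolvent_seminorm \<sigma> (fa_diff (s n) a) < \<epsilon>)"

text \<open>Closed linear spans in R(X,sigma).  Since R_0 is dense and multiplication is
  continuous, [A R(X,sigma)] is the closure of span (A R_0), etc.\<close>

definition right_span :: "'a ralg \<Rightarrow> 'a ralg set" where
  "right_span A = fa_span {fa_mult A B | B. B \<in> fa_carrier}"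
definition left_span :: "'a ralg \<Rightarrow> 'a ralg set" where
  "left_span A = fa_span {fa_mult B A | B. B \<in> fa_carrier}"
definition two_sided_span :: "'a ralg \<Rightarrow> 'a ralg set" where
  "two_sided_span A = fa_span {fa_mult (fa_mult B A) C | B C. B \<in> fa_carrier \<and> C \<in> fa_carrier}"

end

theory Submission
  imports Defs
begin


lemma fa_ext: "(\<And>w. p w = q w) \<Longrightarrow> p = q" by blast

lemma sum_tri_swap:
  fixes G :: "nat \<Rightarrow> nat \<Rightarrow> complex"
  shows "(\<Sum>j\<le>n. \<Sum>i\<le>j. G i (j - i)) = (\<Sum>i\<le>n. \<Sum>k\<le>n - i. G i k)"
proof -
  have "(\<Sum>j\<le>n. \<Sum>i\<le>j. G i (j - i)) = (\<Sum>(i,k)\<in>{(i,k). i+k \<le> n}. G i k)"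
    using sum.triangle_reindex_eq[of "\<lambda>i k. G i k" n] by simp
  also have "{(i,k). i+k \<le> n} = Sigma {..n} (\<lambda>i. {..n-i})" by auto
  also have "(\<Sum>(i,k)\<in>Sigma {..n} (\<lambda>i. {..n-i}). G i k) = (\<Sum>i\<le>n. \<Sum>k\<le>n - i. G i k)"
    by (rule sum.Sigma[symmetric]) auto
  finally show ?thesis .
qed

lemma fa_mult_assoc: "fa_mult (fa_mult p q) r = fa_mult p (fa_mult q r)"
proof (rule fa_ext)
  fix w :: "'a rword"
  define n where "n = length w"
  define G where "G i k = p (take i w) * q (take k (drop i w)) * r (drop (i+k) w)" for i k
  have "fa_mult (fa_mult p q) r w = (\<Sum>j\<le>n. \<Sum>i\<le>j. G i (j - i))"
    unfolding fa_mult_def G_def n_def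
    by (auto simp: sum_distrib_right min_def drop_take intro!: sum.cong)
  also have "\<dots> = (\<Sum>i\<le>n. \<Sum>k\<le>n - i. G i k)" by (rule sum_tri_swap)
  also have "\<dots> = fa_mult p (fa_mult q r) w"
    unfolding fa_mult_def G_def n_def
    by (auto simp: sum_distrib_left mult.assoc add.commute intro!: sum.cong)
  finally show "fa_mult (fa_mult p q) r w = fa_mult p (fa_mult q r) w" .
qed



definition wd :: "'a rword \<Rightarrow> 'a ralg" where "wd u = (\<lambda>w. if w = u then 1 else 0)"
definition validw :: "'a rword \<Rightarrow> bool" where "validw w \<longleftrightarrow> (\<forall>x\<in>set w. fst x \<noteq> 0)"

lemma fa_mult_add_left: "fa_mult (fa_add p q) r = fa_add (fa_mult p r) (fa_mult q r)"
  unfolding fa_mult_def fa_add_def by (auto simp: distrib_right sum.distrib)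
lemma fa_mult_add_right: "fa_mult r (fa_add p q) = fa_add (fa_mult r p) (fa_mult r q)"
  unfolding fa_mult_def fa_add_def by (auto simp: distrib_left sum.distrib)
lemma fa_mult_diff_left: "fa_mult (fa_diff p q) r = fa_diff (fa_mult p r) (fa_mult q r)"
  unfolding fa_mult_def fa_diff_def by (auto simp: left_diff_distrib sum_subtractf)
lemma fa_mult_diff_right: "fa_mult r (fa_diff p q) = fa_diff (fa_mult r p) (fa_mult r q)"
  unfolding fa_mult_def fa_diff_def by (auto simp: right_diff_distrib sum_subtractf)
lemma fa_mult_scale_left: "fa_mult (fa_scale c p) r = fa_scale c (fa_mult p r)"
  unfolding fa_mult_def fa_scale_def by (auto simp: sum_distrib_left mult.assoc)
lemma fa_mult_scale_right: "fa_mult r (fa_scale c p) = fa_scale c (fa_mult r p)"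
  unfolding fa_mult_def fa_scale_def by (auto simp: sum_distrib_left mult.left_commute)
lemma fa_mult_zero_left: "fa_mult fa_zero r = fa_zero"
  unfolding fa_mult_def fa_zero_def by auto
lemma fa_mult_zero_right: "fa_mult r fa_zero = fa_zero"
  unfolding fa_mult_def fa_zero_def by auto

lemma fa_mult_unit_left: "fa_mult fa_unit p = p"
proof (rule fa_ext)
  fix w :: "'a rword"
  have "fa_mult fa_unit p w = (\<Sum>i\<in>{0}. (if take i w = [] then 1 else 0) * p (drop i w))"
    unfolding fa_mult_def fa_unit_def
    by (rule sum.mono_neutral_right) auto
  then show "fa_mult fa_unit p w = p w" by simp
qed

lemma fa_mult_unit_right: "fa_mult p fa_unit = p"
proof (rule fa_ext)
  fix w :: "'a rword"
  have "fa_mult p fa_unit w = (\<Sum>i\<in>{length w}. p (take i w) * (if drop i w = [] then 1 else 0))"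
    unfolding fa_mult_def fa_unit_def
    by (rule sum.mono_neutral_right) auto
  then show "fa_mult p fa_unit w = p w" by simp
qed

lemma wd_mult: "fa_mult (wd u) (wd v) = wd (u @ v)"
proof (rule fa_ext)
  fix w :: "'a rword"
  have e: "fa_mult (wd u) (wd v) w = (\<Sum>i\<le>length w. (if take i w = u \<and> drop i w = v then 1 else 0))"
    unfolding fa_mult_def wd_def by (auto intro!: sum.cong)
  show "fa_mult (wd u) (wd v) w = wd (u @ v) w"
  proof (cases "w = u @ v")
    case True
    have "(\<Sum>i\<le>length w. (if take i w = u \<and> drop i w = v then 1 else 0)) =
       (\<Sum>i\<in>{length u}. (if take i w = u \<and> drop i w = v then 1 else (0::complex)))"
    proof (rule sum.mono_neutral_right)
      show "\<forall>i\<in>{..length w} - {length u}. (if take i w = u \<and> drop i w = v then 1 else (0::complex)) = 0"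
      proof
        fix i assume i: "i \<in> {..length w} - {length u}"
        have "take i w \<noteq> u"
        proof
          assume "take i w = u"
          then have "length u = i" using i by auto
          then show False using i by auto
        qed
        then show "(if take i w = u \<and> drop i w = v then 1 else (0::complex)) = 0" by simp
      qed
    qed (auto simp: True)
    then show ?thesis using e True by (simp add: wd_def)
  next
    case False
    have nn: "\<And>i. \<not> (take i w = u \<and> drop i w = v)" using False by (metis append_take_drop_id)
    have "(\<Sum>i\<le>length w. (if take i w = u \<and> drop i w = v then 1 else (0::complex))) = 0"
      using nn by (simp add: sum.neutral)
    then show ?thesis using e False by (simp add: wd_def)
  qed
qed

lemma fa_gen_wd: "fa_gen l f = wd [(l,f)]" unfolding fa_gen_def wd_def by simp
lemma fa_unit_wd: "fa_unit = wd []" unfolding fa_unit_def wd_def by simp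

definition rw :: "'a rword \<Rightarrow> 'a rword" where "rw w = rev (map (\<lambda>(l, f). (- l, f)) w)"

lemma rw_rw[simp]: "rw (rw w) = w"
  unfolding rw_def by (induct w) (auto simp: rev_map comp_def case_prod_beta)
lemma rw_append: "rw (u @ v) = rw v @ rw u" unfolding rw_def by simp
lemma length_rw[simp]: "length (rw w) = length w" unfolding rw_def by simp

lemma fa_star_alt: "fa_star p = (\<lambda>w. cnj (p (rw w)))" unfolding fa_star_def rw_def by simp

lemma take_rw: "take i (rw w) = rw (drop (length w - i) w)"
  unfolding rw_def by (simp add: take_rev drop_map)
lemma drop_rw: "drop i (rw w) = rw (take (length w - i) w)"
  unfolding rw_def by (simp add: drop_rev take_map)

lemma fa_star_mult: "fa_star (fa_mult p q) = fa_mult (fa_star q) (fa_star p)"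
proof (rule fa_ext)
  fix w :: "'a rword"
  define n where "n = length w"
  have "fa_star (fa_mult p q) w = (\<Sum>i\<le>n. cnj (p (rw (drop (n - i) w))) * cnj (q (rw (take (n - i) w))))"
    unfolding fa_star_alt fa_mult_def n_def by (simp add: take_rw drop_rw)
  also have "\<dots> = (\<Sum>i\<le>n. cnj (p (rw (drop i w))) * cnj (q (rw (take i w))))"
    by (rule sum.reindex_bij_witness[where i="\<lambda>i. n - i" and j="\<lambda>i. n - i"]) auto
  also have "\<dots> = fa_mult (fa_star q) (fa_star p) w"
    unfolding fa_star_alt fa_mult_def n_def by (simp add: mult.commute)
  finally show "fa_star (fa_mult p q) w = fa_mult (fa_star q) (fa_star p) w" .
qed

lemma fa_star_add: "fa_star (fa_add p q) = fa_add (fa_star p) (fa_star q)"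
  unfolding fa_star_def fa_add_def by simp
lemma fa_star_diff: "fa_star (fa_diff p q) = fa_diff (fa_star p) (fa_star q)"
  unfolding fa_star_def fa_diff_def by simp
lemma fa_star_scale: "fa_star (fa_scale c p) = fa_scale (cnj c) (fa_star p)"
  unfolding fa_star_def fa_scale_def by simp
lemma fa_star_star[simp]: "fa_star (fa_star p) = p"
  unfolding fa_star_alt by simp
lemma rw_eq: "rw w = u \<longleftrightarrow> w = rw u" by (metis rw_rw)
lemma fa_star_wd: "fa_star (wd u) = wd (rw u)"
  unfolding fa_star_alt wd_def by (rule fa_ext) (simp add: rw_eq)
lemma fa_star_unit: "fa_star fa_unit = fa_unit"
  by (simp add: fa_unit_wd fa_star_wd rw_def)
lemma fa_star_gen: "fa_star (fa_gen l f) = fa_gen (-l) f"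
  by (simp add: fa_gen_wd fa_star_wd rw_def)
lemma fa_star_zero: "fa_star fa_zero = fa_zero"
  unfolding fa_star_def fa_zero_def by simp



lemma supp_wd: "{w. wd u w \<noteq> 0} = {u}" unfolding wd_def by auto

lemma carrier_wd: "validw u \<Longrightarrow> wd u \<in> fa_carrier"
  unfolding fa_carrier_def validw_def by (auto simp: supp_wd) (auto simp: wd_def split: if_splits)

lemma carrier_zero: "fa_zero \<in> fa_carrier" unfolding fa_carrier_def fa_zero_def by auto
lemma carrier_unit: "fa_unit \<in> fa_carrier" by (simp add: fa_unit_wd carrier_wd validw_def)
lemma carrier_gen: "l \<noteq> 0 \<Longrightarrow> fa_gen l f \<in> fa_carrier" by (simp add: fa_gen_wd carrier_wd validw_def)

lemma carrier_add: "p \<in> fa_carrier \<Longrightarrow> q \<in> fa_carrier \<Longrightarrow> fa_add p q \<in> fa_carrier"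
proof -
  assume p: "p \<in> fa_carrier" and q: "q \<in> fa_carrier"
  have "{w. fa_add p q w \<noteq> 0} \<subseteq> {w. p w \<noteq> 0} \<union> {w. q w \<noteq> 0}" unfolding fa_add_def by auto
  then show ?thesis using p q unfolding fa_carrier_def by (auto intro: finite_subset simp: fa_add_def)
qed

lemma carrier_scale: "p \<in> fa_carrier \<Longrightarrow> fa_scale c p \<in> fa_carrier"
proof -
  assume p: "p \<in> fa_carrier"
  have "{w. fa_scale c p w \<noteq> 0} \<subseteq> {w. p w \<noteq> 0}" unfolding fa_scale_def by auto
  then show ?thesis using p unfolding fa_carrier_def by (auto intro: finite_subset simp: fa_scale_def)
qed

lemma carrier_diff: "p \<in> fa_carrier \<Longrightarrow> q \<in> fa_carrier \<Longrightarrow> fa_diff p q \<in> fa_carrier"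
proof -
  assume p: "p \<in> fa_carrier" and q: "q \<in> fa_carrier"
  have "{w. fa_diff p q w \<noteq> 0} \<subseteq> {w. p w \<noteq> 0} \<union> {w. q w \<noteq> 0}" unfolding fa_diff_def by auto
  then show ?thesis using p q unfolding fa_carrier_def by (auto intro: finite_subset simp: fa_diff_def)
qed

lemma mult_nz: "fa_mult p q w \<noteq> 0 \<Longrightarrow> \<exists>i. p (take i w) \<noteq> 0 \<and> q (drop i w) \<noteq> 0"
proof (rule ccontr)
  assume a: "fa_mult p q w \<noteq> 0" and b: "\<not> (\<exists>i. p (take i w) \<noteq> 0 \<and> q (drop i w) \<noteq> 0)"
  then have "\<forall>i. p (take i w) * q (drop i w) = 0" by auto
  then have "fa_mult p q w = 0" unfolding fa_mult_def by (simp add: sum.neutral)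
  then show False using a by simp
qed

lemma carrier_mult: "p \<in> fa_carrier \<Longrightarrow> q \<in> fa_carrier \<Longrightarrow> fa_mult p q \<in> fa_carrier"
proof -
  assume p: "p \<in> fa_carrier" and q: "q \<in> fa_carrier"
  have "{w. fa_mult p q w \<noteq> 0} \<subseteq> (\<lambda>(u,v). u @ v) ` ({w. p w \<noteq> 0} \<times> {w. q w \<noteq> 0})"
  proof
    fix w assume "w \<in> {w. fa_mult p q w \<noteq> 0}"
    then obtain i where "p (take i w) \<noteq> 0" "q (drop i w) \<noteq> 0" using mult_nz by blast
    then show "w \<in> (\<lambda>(u,v). u @ v) ` ({w. p w \<noteq> 0} \<times> {w. q w \<noteq> 0})"
      by (intro image_eqI[where x="(take i w, drop i w)"]) auto
  qed
  moreover have "finite ((\<lambda>(u,v). u @ v) ` ({w. p w \<noteq> 0} \<times> {w. q w \<noteq> 0}))"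
    using p q unfolding fa_carrier_def by auto
  ultimately have fin: "finite {w. fa_mult p q w \<noteq> 0}" by (rule finite_subset)
  have "\<forall>w. fa_mult p q w \<noteq> 0 \<longrightarrow> (\<forall>x\<in>set w. fst x \<noteq> 0)"
  proof (intro allI impI ballI)
    fix w x assume "fa_mult p q w \<noteq> 0" "x \<in> set w"
    then obtain i where i: "p (take i w) \<noteq> 0" "q (drop i w) \<noteq> 0" using mult_nz by blast
    have "x \<in> set (take i w) \<or> x \<in> set (drop i w)" using \<open>x \<in> set w\<close>
      by (metis Un_iff append_take_drop_id set_append)
    then show "fst x \<noteq> 0" using i p q unfolding fa_carrier_def by blast
  qed
  then show ?thesis using fin unfolding fa_carrier_def by auto
qed

lemma carrier_star: "p \<in> fa_carrier \<Longrightarrow> fa_star p \<in> fa_carrier"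
proof -
  assume p: "p \<in> fa_carrier"
  have "{w. fa_star p w \<noteq> 0} = rw ` {w. p w \<noteq> 0}"
    unfolding fa_star_alt by (auto simp: image_iff) (metis rw_rw)
  then have fin: "finite {w. fa_star p w \<noteq> 0}" using p unfolding fa_carrier_def by simp
  have "\<forall>w. fa_star p w \<noteq> 0 \<longrightarrow> (\<forall>x\<in>set w. fst x \<noteq> 0)"
  proof (intro allI impI ballI)
    fix w x assume "fa_star p w \<noteq> 0" "x \<in> set w"
    then have "p (rw w) \<noteq> 0" unfolding fa_star_alt by simp
    then have "\<forall>y\<in>set (rw w). fst y \<noteq> 0" using p unfolding fa_carrier_def by blast
    moreover have "(case x of (l, f) \<Rightarrow> (- l, f)) \<in> set (rw w)" using \<open>x \<in> set w\<close> unfolding rw_def by auto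
    ultimately show "fst x \<noteq> 0" by (cases x) fastforce
  qed
  then show ?thesis using fin unfolding fa_carrier_def by auto
qed

lemmas carrier_intros = carrier_zero carrier_unit carrier_gen carrier_add carrier_scale carrier_diff
  carrier_mult carrier_star carrier_wd

lemma add_zero_right: "fa_add p fa_zero = p" unfolding fa_add_def fa_zero_def by simp
lemma scale_one: "fa_scale 1 p = p" unfolding fa_scale_def by simp

lemma span_gen: "a \<in> S \<Longrightarrow> a \<in> fa_span S"
  using fa_span.span_step[OF _ fa_span.span_zero, of a S 1] by (simp add: add_zero_right scale_one)

lemma span_add: "p \<in> fa_span S \<Longrightarrow> q \<in> fa_span S \<Longrightarrow> fa_add p q \<in> fa_span S"
proof (induct p rule: fa_span.induct)
  case span_zero then show ?case by (simp add: fa_add_def fa_zero_def)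
next
  case (span_step a p c)
  have "fa_add (fa_add (fa_scale c a) p) q = fa_add (fa_scale c a) (fa_add p q)"
    unfolding fa_add_def by (simp add: add.assoc)
  then show ?case using span_step by (simp add: fa_span.span_step)
qed

lemma span_scale: "p \<in> fa_span S \<Longrightarrow> fa_scale d p \<in> fa_span S"
proof (induct p rule: fa_span.induct)
  case span_zero then show ?case by (simp add: fa_scale_def fa_zero_def fa_span.span_zero[unfolded fa_zero_def])
next
  case (span_step a p c)
  have "fa_scale d (fa_add (fa_scale c a) p) = fa_add (fa_scale (d*c) a) (fa_scale d p)"
    unfolding fa_add_def fa_scale_def by (simp add: algebra_simps)
  then show ?case using span_step by (simp add: fa_span.span_step)
qed

lemma diff_as_add: "fa_diff p q = fa_add p (fa_scale (-1) q)"
  unfolding fa_diff_def fa_add_def fa_scale_def by simp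

lemma span_diff: "p \<in> fa_span S \<Longrightarrow> q \<in> fa_span S \<Longrightarrow> fa_diff p q \<in> fa_span S"
  by (simp add: diff_as_add span_add span_scale)

lemma span_carrier: assumes "S \<subseteq> fa_carrier" "p \<in> fa_span S" shows "p \<in> fa_carrier"
  using assms(2) by (induct p rule: fa_span.induct) (use assms(1) in \<open>auto intro: carrier_intros\<close>)

lemma span_mono_sub: assumes "\<And>a. a \<in> S \<Longrightarrow> a \<in> fa_span T" "p \<in> fa_span S" shows "p \<in> fa_span T"
  using assms(2) by (induct p rule: fa_span.induct) (auto intro: fa_span.span_zero span_add span_scale assms(1))

definition Wds :: "'a ralg set" where "Wds = {wd w | w. validw w}"

lemma carrier_span_wd: "p \<in> fa_carrier \<Longrightarrow> p \<in> fa_span Wds"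
proof (induct "card {w. p w \<noteq> 0}" arbitrary: p)
  case 0
  then have "{w. p w \<noteq> 0} = {}" unfolding fa_carrier_def by auto
  then have "p = fa_zero" unfolding fa_zero_def by auto
  then show ?case by (simp add: fa_span.span_zero)
next
  case (Suc n)
  then obtain w0 where w0: "p w0 \<noteq> 0" by (metis (mono_tags, lifting) Collect_empty_eq card.empty nat.distinct(1))
  define p' where "p' = p(w0 := 0)"
  have fin: "finite {w. p w \<noteq> 0}" using Suc unfolding fa_carrier_def by auto
  have "{w. p' w \<noteq> 0} = {w. p w \<noteq> 0} - {w0}" unfolding p'_def by auto
  then have cp: "card {w. p' w \<noteq> 0} = n" using Suc(2) w0 fin by simp
  have "p' \<in> fa_carrier" using Suc(3) unfolding fa_carrier_def p'_def
    by (auto intro: finite_subset[of _ "{w. p w \<noteq> 0}"])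
  then have sp: "p' \<in> fa_span Wds" using Suc(1) cp by blast
  have vw: "validw w0" using Suc(3) w0 unfolding fa_carrier_def validw_def by auto
  have "p = fa_add (fa_scale (p w0) (wd w0)) p'"
    unfolding fa_add_def fa_scale_def wd_def p'_def by auto
  then show ?case using sp vw by (metis (mono_tags, lifting) Wds_def fa_span.span_step mem_Collect_eq)
qed

lemma Wds_carrier: "Wds \<subseteq> fa_carrier" unfolding Wds_def by (auto intro: carrier_wd)



definition Jid :: "('a::real_vector \<Rightarrow> 'a \<Rightarrow> real) \<Rightarrow> 'a ralg set" where
  "Jid \<sigma> = fa_span {fa_mult (fa_mult a r) b | a r b. a \<in> fa_carrier \<and> b \<in> fa_carrier \<and> r \<in> resolvent_rels \<sigma>}"

lemma rels_carrier: "r \<in> resolvent_rels \<sigma> \<Longrightarrow> r \<in> fa_carrier"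
  unfolding resolvent_rels_def
  by (elim UnE CollectE exE conjE; simp only:;
      intro carrier_diff carrier_mult carrier_scale carrier_add carrier_gen carrier_unit; simp)

lemma J_carrier: "d \<in> Jid \<sigma> \<Longrightarrow> d \<in> fa_carrier"
  unfolding Jid_def
proof (erule span_carrier[rotated])
  show "{fa_mult (fa_mult a r) b | a r b. a \<in> fa_carrier \<and> b \<in> fa_carrier \<and> r \<in> resolvent_rels \<sigma>} \<subseteq> fa_carrier"
    using rels_carrier carrier_mult by blast
qed

lemma J_zero: "fa_zero \<in> Jid \<sigma>" unfolding Jid_def by (rule fa_span.span_zero)
lemma J_add: "p \<in> Jid \<sigma> \<Longrightarrow> q \<in> Jid \<sigma> \<Longrightarrow> fa_add p q \<in> Jid \<sigma>" unfolding Jid_def by (rule span_add)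
lemma J_scale: "p \<in> Jid \<sigma> \<Longrightarrow> fa_scale c p \<in> Jid \<sigma>" unfolding Jid_def by (rule span_scale)
lemma J_diff: "p \<in> Jid \<sigma> \<Longrightarrow> q \<in> Jid \<sigma> \<Longrightarrow> fa_diff p q \<in> Jid \<sigma>" unfolding Jid_def by (rule span_diff)

lemma J_mult_left: assumes "d \<in> Jid \<sigma>" "c \<in> fa_carrier" shows "fa_mult c d \<in> Jid \<sigma>"
  using assms(1) unfolding Jid_def
proof (induct d rule: fa_span.induct)
  case span_zero then show ?case by (simp add: fa_mult_zero_right fa_span.span_zero)
next
  case (span_step g p k)
  then obtain a r b where g: "g = fa_mult (fa_mult a r) b" "a \<in> fa_carrier" "b \<in> fa_carrier" "r \<in> resolvent_rels \<sigma>" by blast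
  have "fa_mult c g = fa_mult (fa_mult (fa_mult c a) r) b" using g by (simp add: fa_mult_assoc)
  then have "fa_mult c g \<in> {fa_mult (fa_mult a r) b | a r b. a \<in> fa_carrier \<and> b \<in> fa_carrier \<and> r \<in> resolvent_rels \<sigma>}"
    using g assms(2) by (blast intro: carrier_mult)
  then show ?case using span_step
    by (simp add: fa_mult_add_right fa_mult_scale_right fa_span.span_step)
qed

lemma J_mult_right: assumes "d \<in> Jid \<sigma>" "c \<in> fa_carrier" shows "fa_mult d c \<in> Jid \<sigma>"
  using assms(1) unfolding Jid_def
proof (induct d rule: fa_span.induct)
  case span_zero then show ?case by (simp add: fa_mult_zero_left fa_span.span_zero)
next
  case (span_step g p k)
  then obtain a r b where g: "g = fa_mult (fa_mult a r) b" "a \<in> fa_carrier" "b \<in> fa_carrier" "r \<in> resolvent_rels \<sigma>" by blast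
  have "fa_mult g c = fa_mult (fa_mult a r) (fa_mult b c)" using g by (simp add: fa_mult_assoc)
  then have "fa_mult g c \<in> {fa_mult (fa_mult a r) b | a r b. a \<in> fa_carrier \<and> b \<in> fa_carrier \<and> r \<in> resolvent_rels \<sigma>}"
    using g assms(2) by (blast intro: carrier_mult)
  then show ?case using span_step
    by (simp add: fa_mult_add_left fa_mult_scale_left fa_span.span_step)
qed

lemma rel_J: "r \<in> resolvent_rels \<sigma> \<Longrightarrow> r \<in> Jid \<sigma>"
proof -
  assume r: "r \<in> resolvent_rels \<sigma>"
  have e: "r = fa_mult (fa_mult fa_unit r) fa_unit" by (simp add: fa_mult_unit_left fa_mult_unit_right)
  show ?thesis unfolding Jid_def
    by (rule span_gen) (use r carrier_unit e in blast)
qed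

definition eqv :: "('a::real_vector \<Rightarrow> 'a \<Rightarrow> real) \<Rightarrow> 'a ralg \<Rightarrow> 'a ralg \<Rightarrow> bool" where
  "eqv \<sigma> x y \<longleftrightarrow> fa_diff x y \<in> Jid \<sigma>"

lemma eqv_refl: "eqv \<sigma> x x"
proof -
  have "fa_diff x x = fa_zero" by (simp add: fa_diff_def fa_zero_def)
  then show ?thesis unfolding eqv_def using J_zero by simp
qed
lemma eqv_sym: "eqv \<sigma> x y \<Longrightarrow> eqv \<sigma> y x"
  unfolding eqv_def using J_scale[of "fa_diff x y" \<sigma> "-1"]
  by (simp add: fa_diff_def fa_scale_def)
lemma eqv_trans: "eqv \<sigma> x y \<Longrightarrow> eqv \<sigma> y z \<Longrightarrow> eqv \<sigma> x z"
  unfolding eqv_def using J_add[of "fa_diff x y" \<sigma> "fa_diff y z"]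
  by (simp add: fa_diff_def fa_add_def)
lemma eqv_add: "eqv \<sigma> x y \<Longrightarrow> eqv \<sigma> x' y' \<Longrightarrow> eqv \<sigma> (fa_add x x') (fa_add y y')"
  unfolding eqv_def using J_add[of "fa_diff x y" \<sigma> "fa_diff x' y'"]
  by (simp add: fa_diff_def fa_add_def algebra_simps)
lemma eqv_diff: "eqv \<sigma> x y \<Longrightarrow> eqv \<sigma> x' y' \<Longrightarrow> eqv \<sigma> (fa_diff x x') (fa_diff y y')"
  unfolding eqv_def using J_diff[of "fa_diff x y" \<sigma> "fa_diff x' y'"]
  by (simp add: fa_diff_def algebra_simps)
lemma eqv_scale: "eqv \<sigma> x y \<Longrightarrow> eqv \<sigma> (fa_scale c x) (fa_scale c y)"
  unfolding eqv_def using J_scale[of "fa_diff x y" \<sigma> c]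
  by (simp add: fa_diff_def fa_scale_def algebra_simps)
lemma eqv_mult_left: "eqv \<sigma> x y \<Longrightarrow> c \<in> fa_carrier \<Longrightarrow> eqv \<sigma> (fa_mult c x) (fa_mult c y)"
  unfolding eqv_def using J_mult_left by (metis fa_mult_diff_right)
lemma eqv_mult_right: "eqv \<sigma> x y \<Longrightarrow> c \<in> fa_carrier \<Longrightarrow> eqv \<sigma> (fa_mult x c) (fa_mult y c)"
  unfolding eqv_def using J_mult_right by (metis fa_mult_diff_left)

lemma eqv_rel: "r \<in> resolvent_rels \<sigma> \<Longrightarrow> r = fa_diff x y \<Longrightarrow> eqv \<sigma> x y"
  unfolding eqv_def using rel_J by blast



definition Bf :: "('a ralg \<Rightarrow> complex) \<Rightarrow> 'a ralg \<Rightarrow> 'a ralg \<Rightarrow> complex" where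
  "Bf \<omega> x y = \<omega> (fa_mult (fa_star x) y)"
definition Qf :: "('a ralg \<Rightarrow> complex) \<Rightarrow> 'a ralg \<Rightarrow> real" where
  "Qf \<omega> x = Re (Bf \<omega> x x)"

context
  fixes \<sigma> :: "'a::real_vector \<Rightarrow> 'a \<Rightarrow> real" and \<omega>
  assumes st: "resolvent_state \<sigma> \<omega>"
begin

lemma st_add: "p \<in> fa_carrier \<Longrightarrow> q \<in> fa_carrier \<Longrightarrow> \<omega> (fa_add p q) = \<omega> p + \<omega> q"
  using st unfolding resolvent_state_def by blast
lemma st_scale: "p \<in> fa_carrier \<Longrightarrow> \<omega> (fa_scale c p) = c * \<omega> p"
  using st unfolding resolvent_state_def by blast
lemma st_unit: "\<omega> fa_unit = 1"
  using st unfolding resolvent_state_def by blast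
lemma st_pos: "p \<in> fa_carrier \<Longrightarrow> Im (\<omega> (fa_mult (fa_star p) p)) = 0 \<and> 0 \<le> Re (\<omega> (fa_mult (fa_star p) p))"
  using st unfolding resolvent_state_def by blast
lemma st_rel: "a \<in> fa_carrier \<Longrightarrow> b \<in> fa_carrier \<Longrightarrow> r \<in> resolvent_rels \<sigma> \<Longrightarrow> \<omega> (fa_mult (fa_mult a r) b) = 0"
  using st unfolding resolvent_state_def by blast

lemma st_zero: "\<omega> fa_zero = 0"
proof -
  have e: "fa_zero = fa_scale 0 fa_unit" unfolding fa_zero_def fa_scale_def by simp
  show ?thesis unfolding e using st_scale[OF carrier_unit, of 0] by simp
qed

lemma st_diff: "p \<in> fa_carrier \<Longrightarrow> q \<in> fa_carrier \<Longrightarrow> \<omega> (fa_diff p q) = \<omega> p - \<omega> q"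
  by (simp add: diff_as_add st_add st_scale carrier_scale)

lemma st_J: assumes "d \<in> Jid \<sigma>" shows "\<omega> d = 0"
  using assms unfolding Jid_def
proof (induct d rule: fa_span.induct)
  case span_zero then show ?case by (rule st_zero)
next
  case (span_step g p k)
  then obtain a r b where g: "g = fa_mult (fa_mult a r) b" "a \<in> fa_carrier" "b \<in> fa_carrier" "r \<in> resolvent_rels \<sigma>" by blast
  have gc: "g \<in> fa_carrier" using g by (auto intro: carrier_mult rels_carrier)
  have pc: "p \<in> fa_carrier" using span_step(2) J_carrier unfolding Jid_def by blast
  show ?case using g gc pc span_step(3) st_rel[of a b r] by (simp add: st_add st_scale carrier_scale)
qed

lemma st_eqv: "eqv \<sigma> x y \<Longrightarrow> x \<in> fa_carrier \<Longrightarrow> y \<in> fa_carrier \<Longrightarrow> \<omega> x = \<omega> y"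
  unfolding eqv_def using st_J st_diff by fastforce

lemma Q_nonneg: "x \<in> fa_carrier \<Longrightarrow> 0 \<le> Qf \<omega> x"
  unfolding Qf_def Bf_def using st_pos by blast

lemma B_real: "x \<in> fa_carrier \<Longrightarrow> Bf \<omega> x x = complex_of_real (Qf \<omega> x)"
  unfolding Qf_def Bf_def using st_pos by (simp add: complex_eq_iff)

lemma expand: "fa_mult (fa_star (fa_add x (fa_scale c y))) (fa_add x (fa_scale c y)) =
   fa_add (fa_add (fa_mult (fa_star x) x) (fa_scale c (fa_mult (fa_star x) y)))
          (fa_add (fa_scale (cnj c) (fa_mult (fa_star y) x)) (fa_scale (cnj c * c) (fa_mult (fa_star y) y)))"
  by (simp add: fa_star_add fa_star_scale fa_mult_add_left fa_mult_add_right fa_mult_scale_left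
      fa_mult_scale_right) (simp add: fa_add_def fa_scale_def algebra_simps)

lemma B_expand: assumes "x \<in> fa_carrier" "y \<in> fa_carrier"
  shows "Bf \<omega> (fa_add x (fa_scale c y)) (fa_add x (fa_scale c y)) =
    Bf \<omega> x x + c * Bf \<omega> x y + cnj c * Bf \<omega> y x + cnj c * c * Bf \<omega> y y"
  unfolding Bf_def expand using assms
  by (simp add: st_add st_scale carrier_intros)

lemma Q_expand_real: assumes "x \<in> fa_carrier" "y \<in> fa_carrier"
  shows "Qf \<omega> (fa_add x (fa_scale (complex_of_real t) y)) =
    Qf \<omega> x + t * Re (Bf \<omega> x y + Bf \<omega> y x) + t^2 * Qf \<omega> y"
  unfolding Qf_def using B_expand[OF assms, of "complex_of_real t"]
  by (simp add: power2_eq_square algebra_simps)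

lemma quad_disc:
  fixes a b c :: real
  assumes "\<And>t. 0 \<le> a + t * b + t^2 * c" "0 \<le> c"
  shows "b^2 \<le> 4 * a * c"
proof (cases "c = 0")
  case True
  have "b = 0"
  proof (rule ccontr)
    assume "b \<noteq> 0"
    then have "0 \<le> a + (-(\<bar>a\<bar> + 1)/b) * b" using assms(1)[of "-(\<bar>a\<bar> + 1)/b"] True by simp
    moreover have "(-(\<bar>a\<bar> + 1)/b) * b = -(\<bar>a\<bar> + 1)" using \<open>b \<noteq> 0\<close> by simp
    ultimately show False by linarith
  qed
  then show ?thesis using True by simp
next
  case False
  then have c: "c > 0" using assms(2) by simp
  have "0 \<le> a + (-b/(2*c)) * b + (-b/(2*c))^2 * c" by (rule assms(1))
  then have "0 \<le> (4*a*c - b^2) / (4*c)" using c by (simp add: field_simps power2_eq_square)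
  then show ?thesis using c by (simp add: divide_nonneg_pos zero_le_divide_iff)
qed

lemma CS: assumes "x \<in> fa_carrier" "y \<in> fa_carrier"
  shows "(Re (Bf \<omega> x y + Bf \<omega> y x))^2 \<le> 4 * Qf \<omega> x * Qf \<omega> y"
proof (rule quad_disc)
  fix t
  show "0 \<le> Qf \<omega> x + t * Re (Bf \<omega> x y + Bf \<omega> y x) + t^2 * Qf \<omega> y"
    using Q_expand_real[OF assms, of t] Q_nonneg[of "fa_add x (fa_scale (complex_of_real t) y)"] assms
    by (simp add: carrier_intros)
qed (rule Q_nonneg[OF assms(2)])

lemma Q_triangle: assumes "x \<in> fa_carrier" "y \<in> fa_carrier"
  shows "sqrt (Qf \<omega> (fa_add x y)) \<le> sqrt (Qf \<omega> x) + sqrt (Qf \<omega> y)"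
proof -
  have e: "fa_add x y = fa_add x (fa_scale (complex_of_real 1) y)" by (simp add: scale_one)
  have q: "Qf \<omega> (fa_add x y) = Qf \<omega> x + Re (Bf \<omega> x y + Bf \<omega> y x) + Qf \<omega> y"
    using Q_expand_real[OF assms, of 1] e by simp
  have qx: "0 \<le> Qf \<omega> x" and qy: "0 \<le> Qf \<omega> y" using Q_nonneg assms by auto
  have "\<bar>Re (Bf \<omega> x y + Bf \<omega> y x)\<bar> \<le> 2 * sqrt (Qf \<omega> x) * sqrt (Qf \<omega> y)"
  proof -
    have "(Re (Bf \<omega> x y + Bf \<omega> y x))^2 \<le> (2 * sqrt (Qf \<omega> x) * sqrt (Qf \<omega> y))^2"
      using CS[OF assms] qx qy by (simp add: power_mult_distrib)
    moreover have "0 \<le> 2 * sqrt (Qf \<omega> x) * sqrt (Qf \<omega> y)" using qx qy by simp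
    ultimately show ?thesis using power2_le_iff_abs_le by blast
  qed
  then have "Qf \<omega> (fa_add x y) \<le> (sqrt (Qf \<omega> x) + sqrt (Qf \<omega> y))^2"
    using q qx qy by (simp add: power2_sum)
  then show ?thesis
    using qx qy by (meson real_le_lsqrt real_sqrt_ge_zero add_nonneg_nonneg)
qed

lemma Q_scale: assumes "x \<in> fa_carrier" shows "Qf \<omega> (fa_scale c x) = (cmod c)^2 * Qf \<omega> x"
proof -
  have "fa_mult (fa_star (fa_scale c x)) (fa_scale c x) = fa_scale (cnj c * c) (fa_mult (fa_star x) x)"
    by (simp add: fa_star_scale fa_mult_scale_left fa_mult_scale_right) (simp add: fa_scale_def algebra_simps)
  then have "Bf \<omega> (fa_scale c x) (fa_scale c x) = (cnj c * c) * Bf \<omega> x x"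
    unfolding Bf_def using assms by (simp add: st_scale carrier_intros)
  moreover have "cnj c * c = complex_of_real ((cmod c)^2)"
    by (metis complex_norm_square mult.commute of_real_power)
  ultimately have "Bf \<omega> (fa_scale c x) (fa_scale c x) = complex_of_real ((cmod c)^2 * Qf \<omega> x)"
    using B_real[OF assms] by simp
  then show ?thesis unfolding Qf_def[of _ "fa_scale c x"] by simp
qed

lemma sqrtQ_scale: assumes "x \<in> fa_carrier" shows "sqrt (Qf \<omega> (fa_scale c x)) = cmod c * sqrt (Qf \<omega> x)"
  using Q_scale[OF assms] by (simp add: real_sqrt_mult)

lemma Q_J: assumes "x \<in> fa_carrier" "d \<in> Jid \<sigma>" shows "Qf \<omega> (fa_add x d) = Qf \<omega> x"
proof -
  have dc: "d \<in> fa_carrier" using J_carrier assms by blast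
  have e: "fa_add x d = fa_add x (fa_scale (complex_of_real 1) d)" by (simp add: scale_one)
  have q: "Qf \<omega> (fa_add x d) = Qf \<omega> x + Re (Bf \<omega> x d + Bf \<omega> d x) + Qf \<omega> d"
    using Q_expand_real[OF assms(1) dc, of 1] e by simp
  have dd: "Qf \<omega> d = 0" unfolding Qf_def Bf_def
    using st_J[OF J_mult_left[OF assms(2) carrier_star[OF dc]]] by simp
  have xd: "Bf \<omega> x d = 0" unfolding Bf_def
    using st_J[OF J_mult_left[OF assms(2) carrier_star[OF assms(1)]]] by simp
  have "(Re (Bf \<omega> d x + Bf \<omega> x d))^2 \<le> 0" using CS[OF dc assms(1)] dd by simp
  then have "Re (Bf \<omega> d x + Bf \<omega> x d) = 0" by simp
  then show ?thesis using q dd xd by simp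
qed

lemma Q_eqv: assumes "x \<in> fa_carrier" "y \<in> fa_carrier" "eqv \<sigma> x y" shows "Qf \<omega> x = Qf \<omega> y"
proof -
  have "fa_diff x y \<in> Jid \<sigma>" using assms(3) unfolding eqv_def .
  then have "Qf \<omega> (fa_add y (fa_diff x y)) = Qf \<omega> y" using Q_J assms by blast
  moreover have "fa_add y (fa_diff x y) = x" unfolding fa_add_def fa_diff_def by simp
  ultimately show ?thesis by simp
qed

end


lemma rel3_mem: "l \<noteq> 0 \<Longrightarrow> m \<noteq> 0 \<Longrightarrow>
  fa_diff (fa_diff (fa_gen l f) (fa_gen m f))
        (fa_scale (\<i> * complex_of_real (m - l)) (fa_mult (fa_gen l f) (fa_gen m f))) \<in> resolvent_rels \<sigma>"
  unfolding resolvent_rels_def by blast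

lemma rel4_mem: "l \<noteq> 0 \<Longrightarrow> m \<noteq> 0 \<Longrightarrow>
  fa_diff (fa_diff (fa_mult (fa_gen l f) (fa_gen m g)) (fa_mult (fa_gen m g) (fa_gen l f)))
        (fa_scale (\<i> * complex_of_real (\<sigma> f g))
          (fa_mult (fa_mult (fa_mult (fa_gen l f) (fa_gen m g)) (fa_gen m g)) (fa_gen l f))) \<in> resolvent_rels \<sigma>"
  unfolding resolvent_rels_def by blast

lemma eqv_of_scaled_rel: "r \<in> resolvent_rels \<sigma> \<Longrightarrow> fa_diff x y = fa_scale c r \<Longrightarrow> eqv \<sigma> x y"
  unfolding eqv_def using rel_J J_scale by metis

definition kk :: "real \<Rightarrow> 'a \<Rightarrow> 'a ralg" where
  "kk l f = fa_diff (fa_scale (complex_of_real (1/l)) fa_unit) (fa_scale \<i> (fa_gen l f))"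

lemma kk_eqv: assumes l: "l \<noteq> 0"
  shows "eqv \<sigma> (fa_mult (fa_star (kk l f)) (kk l f))
     (fa_diff (fa_scale (complex_of_real (1/l^2)) fa_unit) (fa_mult (fa_star (fa_gen l f)) (fa_gen l f)))"
proof (rule eqv_of_scaled_rel[OF rel3_mem[of "-l" l f]])
  let ?g = "fa_gen l f" and ?h = "fa_gen (-l) f"
  have e1: "fa_mult (fa_star (kk l f)) (kk l f) =
     fa_diff (fa_diff (fa_scale (complex_of_real (1/l^2)) fa_unit) (fa_scale (\<i> / complex_of_real l) ?g))
        (fa_diff (fa_scale (- \<i> / complex_of_real l) ?h) (fa_mult ?h ?g))"
    unfolding kk_def
    by (simp add: fa_star_diff fa_star_scale fa_star_unit fa_star_gen fa_mult_diff_left fa_mult_diff_right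
        fa_mult_scale_left fa_mult_scale_right fa_mult_unit_left fa_mult_unit_right)
       (simp add: fa_diff_def fa_scale_def fa_unit_def, rule fa_ext, use l in \<open>simp add: power2_eq_square field_simps\<close>)
  show "fa_diff (fa_mult (fa_star (kk l f)) (kk l f))
     (fa_diff (fa_scale (complex_of_real (1/l^2)) fa_unit) (fa_mult (fa_star ?g) ?g)) =
    fa_scale (\<i> / complex_of_real l) (fa_diff (fa_diff ?h ?g)
        (fa_scale (\<i> * complex_of_real (l - - l)) (fa_mult ?h ?g)))"
    unfolding e1 fa_star_gen using l
    by (simp add: fa_diff_def fa_scale_def) (rule fa_ext, simp add: field_simps)
qed (use l in auto)

context
  fixes \<sigma> :: "'a::real_vector \<Rightarrow> 'a \<Rightarrow> real" and \<omega>
  assumes st: "resolvent_state \<sigma> \<omega>"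
begin

lemma gen_bound: assumes l: "l \<noteq> 0" and y: "y \<in> fa_carrier"
  shows "Qf \<omega> (fa_mult (fa_gen l f) y) \<le> Qf \<omega> y / l^2"
proof -
  let ?g = "fa_gen l f" and ?k = "kk l f"
  have gc: "?g \<in> fa_carrier" using l by (rule carrier_gen)
  have kc: "?k \<in> fa_carrier" unfolding kk_def using l by (simp add: carrier_intros)
  have "eqv \<sigma> (fa_mult (fa_star y) (fa_mult (fa_mult (fa_star ?k) ?k) y))
     (fa_mult (fa_star y) (fa_mult (fa_diff (fa_scale (complex_of_real (1/l^2)) fa_unit) (fa_mult (fa_star ?g) ?g)) y))"
    by (intro eqv_mult_left eqv_mult_right kk_eqv l y carrier_star)
  moreover have "fa_mult (fa_star y) (fa_mult (fa_mult (fa_star ?k) ?k) y) = fa_mult (fa_star (fa_mult ?k y)) (fa_mult ?k y)"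
    by (simp add: fa_star_mult fa_mult_assoc)
  moreover have "fa_mult (fa_star y) (fa_mult (fa_diff (fa_scale (complex_of_real (1/l^2)) fa_unit) (fa_mult (fa_star ?g) ?g)) y)
     = fa_diff (fa_scale (complex_of_real (1/l^2)) (fa_mult (fa_star y) y)) (fa_mult (fa_star (fa_mult ?g y)) (fa_mult ?g y))"
    by (simp add: fa_star_mult fa_mult_assoc fa_mult_diff_left fa_mult_diff_right fa_mult_scale_left
        fa_mult_scale_right fa_mult_unit_left)
  ultimately have "\<omega> (fa_mult (fa_star (fa_mult ?k y)) (fa_mult ?k y)) =
     \<omega> (fa_diff (fa_scale (complex_of_real (1/l^2)) (fa_mult (fa_star y) y)) (fa_mult (fa_star (fa_mult ?g y)) (fa_mult ?g y)))"
    using y gc kc by (intro st_eqv[OF st]) (simp_all add: carrier_intros)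
  also have "\<dots> = complex_of_real (1/l^2) * Bf \<omega> y y - Bf \<omega> (fa_mult ?g y) (fa_mult ?g y)"
    unfolding Bf_def using y gc by (simp add: st_diff[OF st] st_scale[OF st] carrier_intros)
  finally have "Qf \<omega> (fa_mult ?k y) = Qf \<omega> y / l^2 - Qf \<omega> (fa_mult ?g y)"
    unfolding Qf_def Bf_def by simp
  moreover have "0 \<le> Qf \<omega> (fa_mult ?k y)" using Q_nonneg[OF st] kc y by (simp add: carrier_intros)
  ultimately show ?thesis by simp
qed

fun Cw :: "'a rword \<Rightarrow> real" where
  "Cw [] = 1"
| "Cw (x # w) = Cw w / (fst x)^2"

lemma Cw_nonneg: "0 \<le> Cw w" by (induct w) auto

lemma wd_cons: "wd (x # w) = fa_mult (fa_gen (fst x) (snd x)) (wd w)"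
  by (simp add: fa_gen_wd wd_mult)

lemma word_bound: assumes "validw w" "y \<in> fa_carrier"
  shows "Qf \<omega> (fa_mult (wd w) y) \<le> Cw w * Qf \<omega> y"
  using assms
proof (induct w)
  case Nil then show ?case by (simp add: fa_unit_wd[symmetric] fa_mult_unit_left)
next
  case (Cons x w)
  have vw: "validw w" and lx: "fst x \<noteq> 0" using Cons(2) unfolding validw_def by auto
  have wc: "wd w \<in> fa_carrier" using vw by (rule carrier_wd)
  have "Qf \<omega> (fa_mult (wd (x # w)) y) = Qf \<omega> (fa_mult (fa_gen (fst x) (snd x)) (fa_mult (wd w) y))"
    by (simp add: wd_cons fa_mult_assoc)
  also have "\<dots> \<le> Qf \<omega> (fa_mult (wd w) y) / (fst x)^2"
    using gen_bound lx wc Cons(3) carrier_mult by blast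
  also have "\<dots> \<le> Cw w * Qf \<omega> y / (fst x)^2"
    using Cons vw by (simp add: divide_right_mono)
  finally show ?case by simp
qed

lemma Q_unit: "Qf \<omega> fa_unit = 1"
  unfolding Qf_def Bf_def by (simp add: fa_star_unit fa_mult_unit_left st_unit[OF st])

lemma Q_zero: "Qf \<omega> fa_zero = 0"
  unfolding Qf_def Bf_def by (simp add: fa_star_zero fa_mult_zero_left st_zero[OF st])

end

lemma uniform_bound: assumes "x \<in> fa_carrier"
  shows "\<exists>M. \<forall>\<omega>. resolvent_state \<sigma> \<omega> \<longrightarrow> sqrt (Qf \<omega> x) \<le> M"
proof -
  have "x \<in> fa_span Wds" using assms by (rule carrier_span_wd)
  then show ?thesis
  proof (induct x rule: fa_span.induct)
    case span_zero then show ?case using Q_zero by (metis order_refl real_sqrt_zero)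
  next
    case (span_step a p c)
    then obtain w where w: "a = wd w" "validw w" unfolding Wds_def by blast
    obtain M where M: "\<forall>\<omega>. resolvent_state \<sigma> \<omega> \<longrightarrow> sqrt (Qf \<omega> p) \<le> M" using span_step by blast
    have pc: "p \<in> fa_carrier" using span_step(2) span_carrier Wds_carrier by blast
    have ac: "a \<in> fa_carrier" using w carrier_wd by blast
    show ?case
    proof (intro exI allI impI)
      fix \<omega> :: "'a ralg \<Rightarrow> complex" assume st: "resolvent_state \<sigma> \<omega>"
      have "Qf \<omega> a \<le> Cw w" using word_bound[OF st w(2) carrier_unit] w
        by (simp add: Q_unit[OF st] fa_mult_unit_right)
      then have "sqrt (Qf \<omega> a) \<le> sqrt (Cw w)" by simp
      then have "sqrt (Qf \<omega> (fa_scale c a)) \<le> cmod c * sqrt (Cw w)"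
        using sqrtQ_scale[OF st ac] by (simp add: mult_left_mono)
      moreover have "sqrt (Qf \<omega> p) \<le> M" using M st by blast
      ultimately show "sqrt (Qf \<omega> (fa_add (fa_scale c a) p)) \<le> cmod c * sqrt (Cw w) + M"
        using Q_triangle[OF st carrier_scale[OF ac] pc, of c] by linarith
    qed
  qed
qed



abbreviation "Nn \<equiv> resolvent_seminorm"

lemma N_alt: "Nn \<sigma> x = Sup ((\<lambda>\<omega>. sqrt (Qf \<omega> x)) ` {\<omega>. resolvent_state \<sigma> \<omega>})"
  unfolding resolvent_seminorm_def Qf_def Bf_def by simp

lemma N_bdd: "x \<in> fa_carrier \<Longrightarrow> bdd_above ((\<lambda>\<omega>. sqrt (Qf \<omega> x)) ` {\<omega>. resolvent_state \<sigma> \<omega>})"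
  using uniform_bound[of x \<sigma>] by (auto simp: bdd_above_def)

lemma N_ge: "x \<in> fa_carrier \<Longrightarrow> resolvent_state \<sigma> \<omega> \<Longrightarrow> sqrt (Qf \<omega> x) \<le> Nn \<sigma> x"
  unfolding N_alt by (rule cSup_upper) (auto intro: N_bdd)

lemma N_le: assumes ex: "\<exists>\<omega>. resolvent_state \<sigma> \<omega>"
  and "\<And>\<omega>. resolvent_state \<sigma> \<omega> \<Longrightarrow> sqrt (Qf \<omega> x) \<le> M"
  shows "Nn \<sigma> x \<le> M"
  unfolding N_alt using assms by (intro cSup_least) auto

lemma N_eqv: assumes "x \<in> fa_carrier" "y \<in> fa_carrier" "eqv \<sigma> x y" shows "Nn \<sigma> x = Nn \<sigma> y"
  unfolding N_alt using Q_eqv[OF _ assms] by (intro arg_cong[where f=Sup] image_cong) auto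

context
  fixes \<sigma> :: "'a::real_vector \<Rightarrow> 'a \<Rightarrow> real"
  assumes ex: "\<exists>\<omega>. resolvent_state \<sigma> \<omega>"
begin

lemma N_nonneg: "x \<in> fa_carrier \<Longrightarrow> 0 \<le> Nn \<sigma> x"
  using ex N_ge[of x \<sigma>] by (meson order_trans real_sqrt_ge_zero Q_nonneg)

lemma N_add: "x \<in> fa_carrier \<Longrightarrow> y \<in> fa_carrier \<Longrightarrow> Nn \<sigma> (fa_add x y) \<le> Nn \<sigma> x + Nn \<sigma> y"
  by (rule N_le[OF ex]) (meson Q_triangle N_ge add_mono order_trans)

lemma N_scale: "x \<in> fa_carrier \<Longrightarrow> Nn \<sigma> (fa_scale c x) \<le> cmod c * Nn \<sigma> x"
  by (rule N_le[OF ex]) (simp add: sqrtQ_scale N_ge mult_left_mono)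

lemma N_diff: "x \<in> fa_carrier \<Longrightarrow> y \<in> fa_carrier \<Longrightarrow> Nn \<sigma> (fa_diff x y) \<le> Nn \<sigma> x + Nn \<sigma> y"
  using N_add[of x "fa_scale (-1) y"] N_scale[of y "-1"] by (simp add: diff_as_add carrier_intros)

lemma N_unit: "Nn \<sigma> fa_unit \<le> 1"
  by (rule N_le[OF ex]) (simp add: Q_unit)

lemma N_zero: "Nn \<sigma> fa_zero = 0"
proof -
  have "Nn \<sigma> fa_zero \<le> 0" by (rule N_le[OF ex]) (simp add: Q_zero)
  then show ?thesis using N_nonneg[OF carrier_zero] by simp
qed

lemma N_gen: "l \<noteq> 0 \<Longrightarrow> Nn \<sigma> (fa_gen l f) \<le> 1 / \<bar>l\<bar>"
proof (rule N_le[OF ex])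
  fix \<omega> assume l: "l \<noteq> 0" and st: "resolvent_state \<sigma> \<omega>"
  have "Qf \<omega> (fa_gen l f) \<le> 1 / l^2"
    using gen_bound[OF st l carrier_unit, of f] by (simp add: Q_unit[OF st] fa_mult_unit_right)
  then have "sqrt (Qf \<omega> (fa_gen l f)) \<le> sqrt (1 / l^2)" by simp
  then show "sqrt (Qf \<omega> (fa_gen l f)) \<le> 1 / \<bar>l\<bar>" by (simp add: real_sqrt_divide)
qed

end

definition pstate :: "('a ralg \<Rightarrow> complex) \<Rightarrow> 'a ralg \<Rightarrow> real \<Rightarrow> 'a ralg \<Rightarrow> complex" where
  "pstate \<omega> y t z = (\<omega> (fa_mult (fa_star y) (fa_mult z y)) + complex_of_real t * \<omega> z) / complex_of_real (Qf \<omega> y + t)"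

lemma pstate_state: fixes y :: "(real \<times> 'a::real_vector) list \<Rightarrow> complex" assumes st: "resolvent_state \<sigma> \<omega>" and y: "y \<in> fa_carrier" and t: "t > 0"
  shows "resolvent_state \<sigma> (pstate \<omega> y t)"
proof -
  have r: "0 \<le> Qf \<omega> y" using Q_nonneg[OF st y] .
  have ys: "fa_star y \<in> fa_carrier" using y by (rule carrier_star)
  have den: "Qf \<omega> y + t > 0" using r t by simp
  have A: "\<forall>p\<in>fa_carrier. \<forall>q\<in>fa_carrier. pstate \<omega> y t (fa_add p q) = pstate \<omega> y t p + pstate \<omega> y t q"
    unfolding pstate_def using y ys
    by (simp add: fa_mult_add_left fa_mult_add_right st_add[OF st] carrier_intros add_divide_distrib algebra_simps)
  have S: "\<forall>c. \<forall>p\<in>fa_carrier. pstate \<omega> y t (fa_scale c p) = c * pstate \<omega> y t p"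
    unfolding pstate_def using y ys
    by (simp add: fa_mult_scale_left fa_mult_scale_right st_scale[OF st] carrier_intros algebra_simps)
  have U: "pstate \<omega> y t fa_unit = 1"
  proof -
    have num: "\<omega> (fa_mult (fa_star y) (fa_mult fa_unit y)) + complex_of_real t * \<omega> fa_unit = complex_of_real (Qf \<omega> y + t)"
      using B_real[OF st y] by (simp add: fa_mult_unit_left st_unit[OF st] Bf_def)
    have nz: "complex_of_real (Qf \<omega> y + t) \<noteq> 0" using den by (simp only: of_real_eq_0_iff)
    show ?thesis unfolding pstate_def num using nz by (rule divide_self)
  qed
  have P: "\<forall>p\<in>fa_carrier. Im (pstate \<omega> y t (fa_mult (fa_star p) p)) = 0 \<and> 0 \<le> Re (pstate \<omega> y t (fa_mult (fa_star p) p))"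
  proof
    fix p :: "(real \<times> 'a) list \<Rightarrow> complex" assume p: "p \<in> fa_carrier"
    have e: "fa_mult (fa_star y) (fa_mult (fa_mult (fa_star p) p) y) = fa_mult (fa_star (fa_mult p y)) (fa_mult p y)"
      by (simp add: fa_star_mult fa_mult_assoc)
    have "pstate \<omega> y t (fa_mult (fa_star p) p) = complex_of_real ((Qf \<omega> (fa_mult p y) + t * Qf \<omega> p) / (Qf \<omega> y + t))"
      unfolding pstate_def e using B_real[OF st p] B_real[OF st carrier_mult[OF p y]]
      by (simp add: Bf_def)
    moreover have "0 \<le> (Qf \<omega> (fa_mult p y) + t * Qf \<omega> p) / (Qf \<omega> y + t)"
      using Q_nonneg[OF st p] Q_nonneg[OF st carrier_mult[OF p y]] den t by simp
    ultimately show "Im (pstate \<omega> y t (fa_mult (fa_star p) p)) = 0 \<and> 0 \<le> Re (pstate \<omega> y t (fa_mult (fa_star p) p))"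
      by simp
  qed
  have R: "\<forall>a\<in>fa_carrier. \<forall>b\<in>fa_carrier. \<forall>r\<in>resolvent_rels \<sigma>. pstate \<omega> y t (fa_mult (fa_mult a r) b) = 0"
  proof (intro ballI)
    fix a b r :: "(real \<times> 'a) list \<Rightarrow> complex" assume a: "a \<in> fa_carrier" and b: "b \<in> fa_carrier" and r: "r \<in> resolvent_rels \<sigma>"
    have "fa_mult (fa_star y) (fa_mult (fa_mult (fa_mult a r) b) y) = fa_mult (fa_mult (fa_mult (fa_star y) a) r) (fa_mult b y)"
      by (simp add: fa_mult_assoc)
    then show "pstate \<omega> y t (fa_mult (fa_mult a r) b) = 0"
      unfolding pstate_def using st_rel[OF st a b r] st_rel[OF st carrier_mult[OF ys a] carrier_mult[OF b y] r]
      by simp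
  qed
  show ?thesis unfolding resolvent_state_def using A S U P R by blast
qed

lemma Q_mult_bound: assumes st: "resolvent_state \<sigma> \<omega>" and x: "x \<in> fa_carrier" and y: "y \<in> fa_carrier"
  shows "Qf \<omega> (fa_mult x y) \<le> (Nn \<sigma> x)^2 * Qf \<omega> y"
proof (rule ccontr)
  let ?N = "Nn \<sigma> x" and ?a = "Qf \<omega> (fa_mult x y)" and ?b = "Qf \<omega> x" and ?r = "Qf \<omega> y"
  assume "\<not> ?a \<le> ?N^2 * ?r"
  then have gap: "?a - ?N^2 * ?r > 0" by simp
  have b0: "0 \<le> ?b" using Q_nonneg[OF st x] .
  have r0: "0 \<le> ?r" using Q_nonneg[OF st y] .
  define t where "t = (?a - ?N^2 * ?r) / (?N^2 + 1)"
  have t: "t > 0" unfolding t_def using gap by (intro divide_pos_pos) (simp_all add: add_pos_nonneg add_nonneg_pos)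
  have "resolvent_state \<sigma> (pstate \<omega> y t)" using pstate_state[OF st y t] .
  then have "sqrt (Qf (pstate \<omega> y t) x) \<le> ?N" using N_ge[OF x] by blast
  moreover have e: "fa_mult (fa_star y) (fa_mult (fa_mult (fa_star x) x) y) = fa_mult (fa_star (fa_mult x y)) (fa_mult x y)"
    by (simp add: fa_star_mult fa_mult_assoc)
  have "Qf (pstate \<omega> y t) x = (?a + t * ?b) / (?r + t)"
    unfolding Qf_def[of "pstate \<omega> y t"] Bf_def[of "pstate \<omega> y t"] pstate_def e
    using B_real[OF st x] B_real[OF st carrier_mult[OF x y]]
    by (simp add: Bf_def)
  ultimately have "sqrt ((?a + t * ?b) / (?r + t)) \<le> ?N" by simp
  then have "(?a + t * ?b) / (?r + t) \<le> ?N^2"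
    using real_sqrt_le_iff by (metis real_le_rsqrt real_sqrt_ge_zero order_trans sqrt_le_D)
  then have "?a + t * ?b \<le> ?N^2 * (?r + t)" using r0 t by (simp add: divide_le_eq)
  then have "?a - ?N^2 * ?r \<le> t * (?N^2 - ?b)" by (simp add: algebra_simps)
  also have "\<dots> \<le> t * ?N^2" using t b0 by (simp add: mult_left_mono)
  finally have "?a - ?N^2 * ?r \<le> t * ?N^2" .
  moreover have "t * ?N^2 < ?a - ?N^2 * ?r"
  proof -
    have "t * ?N^2 = (?a - ?N^2 * ?r) * (?N^2 / (?N^2 + 1))" unfolding t_def by simp
    also have "\<dots> < (?a - ?N^2 * ?r) * 1"
    proof (intro mult_strict_left_mono)
      have "0 < ?N^2 + 1" by (simp add: add_nonneg_pos)
      then show "?N^2 / (?N^2 + 1) < 1" by (simp add: divide_less_eq_1_pos)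
    qed (use gap in simp)
    finally show ?thesis by simp
  qed
  ultimately show False by simp
qed



lemma N_mult: assumes ex: "\<exists>\<omega>. resolvent_state \<sigma> \<omega>" and x: "x \<in> fa_carrier" and y: "y \<in> fa_carrier"
  shows "Nn \<sigma> (fa_mult x y) \<le> Nn \<sigma> x * Nn \<sigma> y"
proof (rule N_le[OF ex])
  fix \<omega> assume st: "resolvent_state \<sigma> \<omega>"
  have "sqrt (Qf \<omega> (fa_mult x y)) \<le> sqrt ((Nn \<sigma> x)^2 * Qf \<omega> y)"
    using Q_mult_bound[OF st x y] by simp
  also have "\<dots> = Nn \<sigma> x * sqrt (Qf \<omega> y)" using N_nonneg[OF ex x] by (simp add: real_sqrt_mult)
  also have "\<dots> \<le> Nn \<sigma> x * Nn \<sigma> y" using N_nonneg[OF ex x] N_ge[OF y st] by (simp add: mult_left_mono)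
  finally show "sqrt (Qf \<omega> (fa_mult x y)) \<le> Nn \<sigma> x * Nn \<sigma> y" .
qed

fun chw :: "'a::zero rword \<Rightarrow> complex" where
  "chw [] = 1"
| "chw (x # w) = (if snd x = 0 then - \<i> / complex_of_real (fst x) else 0) * chw w"

definition chi :: "'a::zero ralg \<Rightarrow> complex" where
  "chi p = (\<Sum>w\<in>{w. p w \<noteq> 0}. p w * chw w)"

lemma chi_sum: "finite F \<Longrightarrow> {w. p w \<noteq> 0} \<subseteq> F \<Longrightarrow> chi p = (\<Sum>w\<in>F. p w * chw w)"
  unfolding chi_def by (rule sum.mono_neutral_left) auto

lemma fin_supp: "p \<in> fa_carrier \<Longrightarrow> finite {w. p w \<noteq> 0}" unfolding fa_carrier_def by auto

lemma chi_add: assumes "p \<in> fa_carrier" "q \<in> fa_carrier" shows "chi (fa_add p q) = chi p + chi q"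
proof -
  let ?F = "{w. p w \<noteq> 0} \<union> {w. q w \<noteq> 0}"
  have f: "finite ?F" using assms fin_supp by blast
  have "chi (fa_add p q) = (\<Sum>w\<in>?F. fa_add p q w * chw w)" by (rule chi_sum[OF f]) (auto simp: fa_add_def)
  also have "\<dots> = (\<Sum>w\<in>?F. p w * chw w) + (\<Sum>w\<in>?F. q w * chw w)"
    by (simp add: fa_add_def distrib_right sum.distrib)
  also have "\<dots> = chi p + chi q" using chi_sum[OF f, of p] chi_sum[OF f, of q] by auto
  finally show ?thesis .
qed

lemma chi_scale: assumes "p \<in> fa_carrier" shows "chi (fa_scale c p) = c * chi p"
proof -
  let ?F = "{w. p w \<noteq> 0}"
  have f: "finite ?F" using assms fin_supp by blast
  have "chi (fa_scale c p) = (\<Sum>w\<in>?F. fa_scale c p w * chw w)" by (rule chi_sum[OF f]) (auto simp: fa_scale_def)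
  also have "\<dots> = c * chi p" unfolding chi_def by (simp add: fa_scale_def sum_distrib_left mult.assoc)
  finally show ?thesis .
qed

lemma chi_diff: "p \<in> fa_carrier \<Longrightarrow> q \<in> fa_carrier \<Longrightarrow> chi (fa_diff p q) = chi p - chi q"
  by (simp add: diff_as_add chi_add chi_scale carrier_scale)

lemma chi_wd: "chi (wd u) = chw u"
  unfolding chi_def supp_wd by (simp add: wd_def)

lemma chw_append: "chw (u @ v) = chw u * chw v" by (induct u) auto

lemma chw_rw: "chw (rw w) = cnj (chw w)"
proof (induct w)
  case Nil then show ?case by (simp add: rw_def)
next
  case (Cons x w)
  have "rw (x # w) = rw w @ [(- fst x, snd x)]" unfolding rw_def by (cases x) simp
  then show ?case using Cons by (simp add: chw_append mult.commute)
qed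

lemma chi_zero: "chi fa_zero = 0" unfolding chi_def fa_zero_def by simp

lemma chi_wd_mult: assumes "q \<in> fa_carrier" "validw u" shows "chi (fa_mult (wd u) q) = chw u * chi q"
proof -
  have "q \<in> fa_span Wds" using assms(1) by (rule carrier_span_wd)
  then show ?thesis
  proof (induct q rule: fa_span.induct)
    case span_zero then show ?case by (simp add: fa_mult_zero_right chi_zero)
  next
    case (span_step a p c)
    then obtain v where v: "a = wd v" "validw v" unfolding Wds_def by blast
    have pc: "p \<in> fa_carrier" using span_step(2) span_carrier Wds_carrier by blast
    have uv: "validw (u @ v)" using v assms(2) unfolding validw_def by auto
    have "chi (fa_mult (wd u) (fa_add (fa_scale c a) p)) = chi (fa_add (fa_scale c (wd (u @ v))) (fa_mult (wd u) p))"
      by (simp add: fa_mult_add_right fa_mult_scale_right v wd_mult)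
    also have "\<dots> = c * chw (u @ v) + chw u * chi p"
      using span_step(3) pc uv assms(2) by (simp add: chi_add chi_scale carrier_intros chi_wd)
    also have "\<dots> = chw u * chi (fa_add (fa_scale c a) p)"
      using pc v by (simp add: chi_add chi_scale carrier_intros chi_wd chw_append algebra_simps)
    finally show ?case .
  qed
qed

lemma chi_mult: assumes "p \<in> fa_carrier" "q \<in> fa_carrier" shows "chi (fa_mult p q) = chi p * chi q"
proof -
  have "p \<in> fa_span Wds" using assms(1) by (rule carrier_span_wd)
  then show ?thesis
  proof (induct p rule: fa_span.induct)
    case span_zero then show ?case by (simp add: fa_mult_zero_left chi_zero)
  next
    case (span_step a p c)
    then obtain v where v: "a = wd v" "validw v" unfolding Wds_def by blast
    have pc: "p \<in> fa_carrier" using span_step(2) span_carrier Wds_carrier by blast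
    have "chi (fa_mult (fa_add (fa_scale c a) p) q) = chi (fa_add (fa_scale c (fa_mult (wd v) q)) (fa_mult p q))"
      by (simp add: fa_mult_add_left fa_mult_scale_left v)
    also have "\<dots> = c * (chw v * chi q) + chi p * chi q"
      using span_step(3) pc v assms(2) by (simp add: chi_add chi_scale carrier_intros chi_wd_mult)
    also have "\<dots> = chi (fa_add (fa_scale c a) p) * chi q"
      using pc v by (simp add: chi_add chi_scale carrier_intros chi_wd algebra_simps)
    finally show ?case .
  qed
qed

lemma chi_star: assumes "p \<in> fa_carrier" shows "chi (fa_star p) = cnj (chi p)"
proof -
  have "p \<in> fa_span Wds" using assms(1) by (rule carrier_span_wd)
  then show ?thesis
  proof (induct p rule: fa_span.induct)
    case span_zero then show ?case by (simp add: fa_star_zero chi_zero)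
  next
    case (span_step a p c)
    then obtain v where v: "a = wd v" "validw v" unfolding Wds_def by blast
    have pc: "p \<in> fa_carrier" using span_step(2) span_carrier Wds_carrier by blast
    have vr: "validw (rw v)" using v(2) unfolding validw_def rw_def by auto
    show ?case using span_step(3) pc v vr
      by (simp add: fa_star_add fa_star_scale fa_star_wd chi_add chi_scale carrier_intros chi_wd chw_rw)
  qed
qed

lemma chi_unit: "chi fa_unit = 1" by (simp add: fa_unit_wd chi_wd)
lemma chi_gen: "chi (fa_gen l f) = (if f = 0 then - \<i> / complex_of_real l else 0)"
  by (simp add: fa_gen_wd chi_wd)

lemma sig00: "symplectic_form \<sigma> \<Longrightarrow> \<sigma> 0 0 = 0"
  unfolding symplectic_form_def by (metis add.inverse_neutral neg_equal_zero)

lemma chi_rel: assumes sy: "symplectic_form \<sigma>" and "r \<in> resolvent_rels \<sigma>" shows "chi r = 0"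
  using assms(2) unfolding resolvent_rels_def
proof (elim UnE CollectE exE conjE)
  fix l assume "r = fa_diff (fa_gen l 0) (fa_scale (- \<i> / complex_of_real l) fa_unit)" "l \<noteq> 0"
  then show "chi r = 0" by (simp add: chi_diff chi_scale chi_gen chi_unit carrier_intros)
next
  fix \<nu> l f assume "r = fa_diff (fa_scale (complex_of_real \<nu>) (fa_gen (\<nu> * l) (\<nu> *\<^sub>R f))) (fa_gen l f)" "\<nu> \<noteq> 0" "l \<noteq> 0"
  then show "chi r = 0" by (simp add: chi_diff chi_scale chi_gen chi_unit carrier_intros field_simps)
next
  fix l m f assume "r = fa_diff (fa_diff (fa_gen l f) (fa_gen m f))
        (fa_scale (\<i> * complex_of_real (m - l)) (fa_mult (fa_gen l f) (fa_gen m f)))" "l \<noteq> 0" "m \<noteq> 0"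
  then show "chi r = 0" by (simp add: chi_diff chi_scale chi_mult chi_gen chi_unit carrier_intros field_simps)
next
  fix l m f g assume "r = fa_diff (fa_diff (fa_mult (fa_gen l f) (fa_gen m g)) (fa_mult (fa_gen m g) (fa_gen l f)))
        (fa_scale (\<i> * complex_of_real (\<sigma> f g))
          (fa_mult (fa_mult (fa_mult (fa_gen l f) (fa_gen m g)) (fa_gen m g)) (fa_gen l f)))" "l \<noteq> 0" "m \<noteq> 0"
  then show "chi r = 0" by (simp add: chi_diff chi_scale chi_mult chi_gen chi_unit carrier_intros sig00[OF sy])
next
  fix l m f g assume "r = fa_diff (fa_mult (fa_gen l f) (fa_gen m g))
        (fa_mult (fa_gen (l + m) (f + g))
          (fa_add (fa_add (fa_gen l f) (fa_gen m g))
            (fa_scale (\<i> * complex_of_real (\<sigma> f g))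
               (fa_mult (fa_mult (fa_gen l f) (fa_gen l f)) (fa_gen m g)))))" "l \<noteq> 0" "m \<noteq> 0" "l + m \<noteq> 0"
  moreover have lm: "complex_of_real l + complex_of_real m \<noteq> 0" using \<open>l + m \<noteq> 0\<close>
    by (metis of_real_add of_real_eq_0_iff)
  moreover have "complex_of_real l * (complex_of_real l * complex_of_real m) + complex_of_real l * (complex_of_real m * complex_of_real m) \<noteq> 0"
  proof -
    have "complex_of_real l * (complex_of_real l * complex_of_real m) + complex_of_real l * (complex_of_real m * complex_of_real m)
      = complex_of_real l * complex_of_real m * (complex_of_real l + complex_of_real m)" by (simp add: algebra_simps)
    then show ?thesis using lm \<open>l \<noteq> 0\<close> \<open>m \<noteq> 0\<close> by simp
  qed
  ultimately show "chi r = 0" 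
    by (simp add: chi_diff chi_scale chi_mult chi_add chi_gen chi_unit carrier_intros sig00[OF sy])
       (auto simp: field_simps)
qed

lemma chi_state: fixes \<sigma> :: "'a::real_vector \<Rightarrow> 'a \<Rightarrow> real" assumes sy: "symplectic_form \<sigma>"
  shows "resolvent_state \<sigma> chi"
  unfolding resolvent_state_def
proof (intro conjI ballI allI)
  fix p :: "(real \<times> 'a) list \<Rightarrow> complex" assume p: "p \<in> fa_carrier"
  have "chi (fa_mult (fa_star p) p) = complex_of_real ((cmod (chi p))^2)"
    using p by (simp add: chi_mult chi_star carrier_intros)
      (metis complex_norm_square mult.commute of_real_power)
  then show "Im (chi (fa_mult (fa_star p) p)) = 0" "0 \<le> Re (chi (fa_mult (fa_star p) p))" by simp_all
next
  fix a b r :: "(real \<times> 'a) list \<Rightarrow> complex" assume "a \<in> fa_carrier" "b \<in> fa_carrier" "r \<in> resolvent_rels \<sigma>"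
  then show "chi (fa_mult (fa_mult a r) b) = 0"
    by (simp add: chi_mult chi_rel[OF sy] carrier_intros rels_carrier)
qed (simp_all add: chi_add chi_scale chi_unit)

lemma states_ex: "symplectic_form \<sigma> \<Longrightarrow> \<exists>\<omega>. resolvent_state \<sigma> \<omega>" using chi_state by blast



lemma wd_cons': "wd (x # w) = fa_mult (fa_gen (fst x) (snd x)) (wd w)"
  by (simp add: fa_gen_wd wd_mult)

lemma comm_RL: assumes l: "l \<noteq> 0" and m: "m \<noteq> 0"
  shows "eqv \<sigma> (fa_mult (fa_gen l f) (fa_gen m g))
     (fa_mult (fa_add (fa_gen m g) (fa_scale (\<i> * complex_of_real (\<sigma> f g)) (fa_mult (fa_mult (fa_gen l f) (fa_gen m g)) (fa_gen m g)))) (fa_gen l f))"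
  by (rule eqv_of_scaled_rel[OF rel4_mem[OF l m, of f g \<sigma>], of _ _ 1])
     (simp only: fa_mult_add_left fa_mult_scale_left fa_mult_assoc, simp add: fa_diff_def fa_add_def fa_scale_def algebra_simps)

lemma comm_LR: assumes l: "l \<noteq> 0" and m: "m \<noteq> 0"
  shows "eqv \<sigma> (fa_mult (fa_gen m g) (fa_gen l f))
     (fa_mult (fa_gen l f) (fa_diff (fa_gen m g) (fa_scale (\<i> * complex_of_real (\<sigma> f g)) (fa_mult (fa_mult (fa_gen m g) (fa_gen m g)) (fa_gen l f)))))"
  by (rule eqv_of_scaled_rel[OF rel4_mem[OF l m, of f g \<sigma>], of _ _ "-1"])
     (simp only: fa_mult_diff_right fa_mult_scale_right fa_mult_assoc, simp add: fa_diff_def fa_add_def fa_scale_def algebra_simps)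

context
  fixes \<sigma> :: "'a::real_vector \<Rightarrow> 'a \<Rightarrow> real" and l :: real and f :: 'a
  assumes l: "l \<noteq> 0"
begin

lemma word_LR: "validw w \<Longrightarrow> \<exists>c\<in>fa_carrier. eqv \<sigma> (fa_mult (wd w) (fa_gen l f)) (fa_mult (fa_gen l f) c)"
proof (induct w)
  case Nil then show ?case
    by (intro bexI[of _ fa_unit]) (simp_all add: fa_unit_wd[symmetric] fa_mult_unit_left fa_mult_unit_right eqv_refl carrier_unit)
next
  case (Cons x w)
  let ?g = "fa_gen l f" and ?h = "fa_gen (fst x) (snd x)"
  have vw: "validw w" and lx: "fst x \<noteq> 0" using Cons(2) unfolding validw_def by auto
  obtain c where c: "c \<in> fa_carrier" "eqv \<sigma> (fa_mult (wd w) ?g) (fa_mult ?g c)" using Cons(1) vw by blast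
  define Y where "Y = fa_diff ?h (fa_scale (\<i> * complex_of_real (\<sigma> f (snd x))) (fa_mult (fa_mult ?h ?h) ?g))"
  have Yc: "Y \<in> fa_carrier" unfolding Y_def using l lx by (simp add: carrier_intros)
  have hc: "?h \<in> fa_carrier" using lx by (rule carrier_gen)
  have "fa_mult (wd (x # w)) ?g = fa_mult ?h (fa_mult (wd w) ?g)" by (simp add: wd_cons' fa_mult_assoc)
  moreover have "eqv \<sigma> (fa_mult ?h (fa_mult (wd w) ?g)) (fa_mult (fa_mult ?h ?g) c)"
    using eqv_mult_left[OF c(2) hc] by (simp add: fa_mult_assoc)
  moreover have "eqv \<sigma> (fa_mult (fa_mult ?h ?g) c) (fa_mult (fa_mult ?g Y) c)"
    unfolding Y_def by (rule eqv_mult_right[OF comm_LR[OF l lx] c(1)])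
  ultimately have "eqv \<sigma> (fa_mult (wd (x # w)) ?g) (fa_mult ?g (fa_mult Y c))"
    by (metis eqv_trans fa_mult_assoc)
  then show ?case using Yc c(1) carrier_mult by blast
qed

lemma word_RL: "validw w \<Longrightarrow> \<exists>c\<in>fa_carrier. eqv \<sigma> (fa_mult (fa_gen l f) (wd w)) (fa_mult c (fa_gen l f))"
proof (induct w)
  case Nil then show ?case
    by (intro bexI[of _ fa_unit]) (simp_all add: fa_unit_wd[symmetric] fa_mult_unit_left fa_mult_unit_right eqv_refl carrier_unit)
next
  case (Cons x w)
  let ?g = "fa_gen l f" and ?h = "fa_gen (fst x) (snd x)"
  have vw: "validw w" and lx: "fst x \<noteq> 0" using Cons(2) unfolding validw_def by auto
  obtain c where c: "c \<in> fa_carrier" "eqv \<sigma> (fa_mult ?g (wd w)) (fa_mult c ?g)" using Cons(1) vw by blast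
  define X where "X = fa_add ?h (fa_scale (\<i> * complex_of_real (\<sigma> f (snd x))) (fa_mult (fa_mult ?g ?h) ?h))"
  have Xc: "X \<in> fa_carrier" unfolding X_def using l lx by (simp add: carrier_intros)
  have wc: "wd w \<in> fa_carrier" using vw by (rule carrier_wd)
  have "fa_mult ?g (wd (x # w)) = fa_mult (fa_mult ?g ?h) (wd w)" by (simp add: wd_cons' fa_mult_assoc)
  moreover have "eqv \<sigma> (fa_mult (fa_mult ?g ?h) (wd w)) (fa_mult (fa_mult X ?g) (wd w))"
    unfolding X_def by (rule eqv_mult_right[OF comm_RL[OF l lx] wc])
  moreover have "eqv \<sigma> (fa_mult X (fa_mult ?g (wd w))) (fa_mult X (fa_mult c ?g))"
    by (rule eqv_mult_left[OF c(2) Xc])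
  ultimately have "eqv \<sigma> (fa_mult ?g (wd (x # w))) (fa_mult (fa_mult X c) ?g)"
    by (metis eqv_trans fa_mult_assoc)
  then show ?case using Xc c(1) carrier_mult by blast
qed

lemma conv_LR: assumes "a \<in> fa_carrier"
  shows "\<exists>c\<in>fa_carrier. eqv \<sigma> (fa_mult a (fa_gen l f)) (fa_mult (fa_gen l f) c)"
proof -
  have "a \<in> fa_span Wds" using assms by (rule carrier_span_wd)
  then show ?thesis
  proof (induct a rule: fa_span.induct)
    case span_zero then show ?case
      by (intro bexI[of _ fa_zero]) (simp_all add: fa_mult_zero_left fa_mult_zero_right eqv_refl carrier_zero)
  next
    case (span_step a p k)
    then obtain w where w: "a = wd w" "validw w" unfolding Wds_def by blast
    obtain c1 where c1: "c1 \<in> fa_carrier" "eqv \<sigma> (fa_mult (wd w) (fa_gen l f)) (fa_mult (fa_gen l f) c1)"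
      using word_LR w(2) by blast
    obtain c2 where c2: "c2 \<in> fa_carrier" "eqv \<sigma> (fa_mult p (fa_gen l f)) (fa_mult (fa_gen l f) c2)"
      using span_step(3) by blast
    have "eqv \<sigma> (fa_mult (fa_add (fa_scale k a) p) (fa_gen l f)) (fa_mult (fa_gen l f) (fa_add (fa_scale k c1) c2))"
      using eqv_add[OF eqv_scale[OF c1(2), of k] c2(2)] w
      by (simp add: fa_mult_add_left fa_mult_add_right fa_mult_scale_left fa_mult_scale_right)
    then show ?case using c1 c2 by (blast intro: carrier_add carrier_scale)
  qed
qed

lemma conv_RL: assumes "a \<in> fa_carrier"
  shows "\<exists>c\<in>fa_carrier. eqv \<sigma> (fa_mult (fa_gen l f) a) (fa_mult c (fa_gen l f))"
proof -
  have "a \<in> fa_span Wds" using assms by (rule carrier_span_wd)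
  then show ?thesis
  proof (induct a rule: fa_span.induct)
    case span_zero then show ?case
      by (intro bexI[of _ fa_zero]) (simp_all add: fa_mult_zero_left fa_mult_zero_right eqv_refl carrier_zero)
  next
    case (span_step a p k)
    then obtain w where w: "a = wd w" "validw w" unfolding Wds_def by blast
    obtain c1 where c1: "c1 \<in> fa_carrier" "eqv \<sigma> (fa_mult (fa_gen l f) (wd w)) (fa_mult c1 (fa_gen l f))"
      using word_RL w(2) by blast
    obtain c2 where c2: "c2 \<in> fa_carrier" "eqv \<sigma> (fa_mult (fa_gen l f) p) (fa_mult c2 (fa_gen l f))"
      using span_step(3) by blast
    have "eqv \<sigma> (fa_mult (fa_gen l f) (fa_add (fa_scale k a) p)) (fa_mult (fa_add (fa_scale k c1) c2) (fa_gen l f))"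
      using eqv_add[OF eqv_scale[OF c1(2), of k] c2(2)] w
      by (simp add: fa_mult_add_left fa_mult_add_right fa_mult_scale_left fa_mult_scale_right)
    then show ?case using c1 c2 by (blast intro: carrier_add carrier_scale)
  qed
qed

end

lemma rs_char: assumes "A \<in> fa_carrier" "x \<in> right_span A" shows "\<exists>B\<in>fa_carrier. x = fa_mult A B"
  using assms(2) unfolding right_span_def
proof (induct x rule: fa_span.induct)
  case span_zero then show ?case using carrier_zero fa_mult_zero_right by metis
next
  case (span_step a p c)
  then obtain B1 B2 where "a = fa_mult A B1" "B1 \<in> fa_carrier" "p = fa_mult A B2" "B2 \<in> fa_carrier" by blast
  then show ?case
    by (intro bexI[of _ "fa_add (fa_scale c B1) B2"]) (simp_all add: fa_mult_add_right fa_mult_scale_right carrier_intros)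
qed

lemma ls_char: assumes "A \<in> fa_carrier" "x \<in> left_span A" shows "\<exists>B\<in>fa_carrier. x = fa_mult B A"
  using assms(2) unfolding left_span_def
proof (induct x rule: fa_span.induct)
  case span_zero then show ?case using carrier_zero fa_mult_zero_left by metis
next
  case (span_step a p c)
  then obtain B1 B2 where "a = fa_mult B1 A" "B1 \<in> fa_carrier" "p = fa_mult B2 A" "B2 \<in> fa_carrier" by blast
  then show ?case
    by (intro bexI[of _ "fa_add (fa_scale c B1) B2"]) (simp_all add: fa_mult_add_left fa_mult_scale_left carrier_intros)
qed

lemma in_rs: "B \<in> fa_carrier \<Longrightarrow> fa_mult A B \<in> right_span A"
  unfolding right_span_def by (rule span_gen) blast
lemma in_ls: "B \<in> fa_carrier \<Longrightarrow> fa_mult B A \<in> left_span A"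
  unfolding left_span_def by (rule span_gen) blast
lemma in_ts: "B \<in> fa_carrier \<Longrightarrow> C \<in> fa_carrier \<Longrightarrow> fa_mult (fa_mult B A) C \<in> two_sided_span A"
  unfolding two_sided_span_def by (rule span_gen) blast

lemma ts_char: assumes l: "l \<noteq> 0" and "x \<in> two_sided_span (fa_gen l f)"
  shows "\<exists>B\<in>fa_carrier. eqv \<sigma> x (fa_mult B (fa_gen l f))"
  using assms(2) unfolding two_sided_span_def
proof (induct x rule: fa_span.induct)
  case span_zero then show ?case using carrier_zero fa_mult_zero_left eqv_refl by metis
next
  case (span_step a p c)
  then obtain B C where a: "a = fa_mult (fa_mult B (fa_gen l f)) C" "B \<in> fa_carrier" "C \<in> fa_carrier" by blast
  obtain C' where C': "C' \<in> fa_carrier" "eqv \<sigma> (fa_mult (fa_gen l f) C) (fa_mult C' (fa_gen l f))"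
    using conv_RL[OF l a(3)] by blast
  have "eqv \<sigma> a (fa_mult (fa_mult B C') (fa_gen l f))"
    using eqv_mult_left[OF C'(2) a(2)] a(1) by (simp add: fa_mult_assoc)
  then have e1: "eqv \<sigma> (fa_scale c a) (fa_scale c (fa_mult (fa_mult B C') (fa_gen l f)))" by (rule eqv_scale)
  obtain B2 where B2: "B2 \<in> fa_carrier" "eqv \<sigma> p (fa_mult B2 (fa_gen l f))" using span_step by blast
  have "eqv \<sigma> (fa_add (fa_scale c a) p) (fa_mult (fa_add (fa_scale c (fa_mult B C')) B2) (fa_gen l f))"
    using eqv_add[OF e1 B2(2)] by (simp add: fa_mult_add_left fa_mult_scale_left)
  then show ?case using a C' B2 by (blast intro: carrier_intros)
qed

lemma cl_transfer:
  assumes ex: "\<exists>\<omega>. resolvent_state \<sigma> \<omega>" and s: "\<forall>n. s n \<in> fa_carrier"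
    and cl: "res_in_closure \<sigma> s S1"
    and tr: "\<And>a. a \<in> S1 \<Longrightarrow> \<exists>b\<in>S2. a \<in> fa_carrier \<and> b \<in> fa_carrier \<and> eqv \<sigma> a b"
  shows "res_in_closure \<sigma> s S2"
  unfolding res_in_closure_def
proof (intro allI impI)
  fix e :: real assume e: "e > 0"
  obtain a M where a: "a \<in> S1" "\<forall>n\<ge>M. Nn \<sigma> (fa_diff (s n) a) < e"
    using cl e unfolding res_in_closure_def by blast
  obtain b where b: "b \<in> S2" "a \<in> fa_carrier" "b \<in> fa_carrier" "eqv \<sigma> a b" using tr[OF a(1)] by blast
  have "\<forall>n\<ge>M. Nn \<sigma> (fa_diff (s n) b) < e"
  proof (intro allI impI)
    fix n :: nat assume "n \<ge> M"
    have "eqv \<sigma> (fa_diff (s n) a) (fa_diff (s n) b)" by (rule eqv_diff[OF eqv_refl b(4)])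
    then have eq: "Nn \<sigma> (fa_diff (s n) a) = Nn \<sigma> (fa_diff (s n) b)"
      using s b by (intro N_eqv) (simp_all add: carrier_intros)
    have "Nn \<sigma> (fa_diff (s n) a) < e" using a(2) \<open>n \<ge> M\<close> by blast
    then show "Nn \<sigma> (fa_diff (s n) b) < e" unfolding eq .
  qed
  then show "\<exists>b\<in>S2. \<exists>M. \<forall>n\<ge>M. Nn \<sigma> (fa_diff (s n) b) < e" using b(1) by blast
qed



lemma part1:
  assumes ex: "\<exists>\<omega>. resolvent_state \<sigma> \<omega>" and s: "\<forall>n. s n \<in> fa_carrier" and l: "l \<noteq> 0"
  shows "(res_in_closure \<sigma> s (right_span (fa_gen l f)) \<longleftrightarrow> res_in_closure \<sigma> s (left_span (fa_gen l f))) \<and>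
         (res_in_closure \<sigma> s (left_span (fa_gen l f)) \<longleftrightarrow> res_in_closure \<sigma> s (two_sided_span (fa_gen l f)))"
proof -
  let ?g = "fa_gen l f"
  have gc: "?g \<in> fa_carrier" using l by (rule carrier_gen)
  have rl: "res_in_closure \<sigma> s (left_span ?g)" if "res_in_closure \<sigma> s (right_span ?g)"
  proof (rule cl_transfer[OF ex s that])
    fix a assume "a \<in> right_span ?g"
    then obtain B where B: "B \<in> fa_carrier" "a = fa_mult ?g B" using rs_char gc by blast
    obtain C where C: "C \<in> fa_carrier" "eqv \<sigma> (fa_mult ?g B) (fa_mult C ?g)" using conv_RL[OF l B(1)] by blast
    show "\<exists>b\<in>left_span ?g. a \<in> fa_carrier \<and> b \<in> fa_carrier \<and> eqv \<sigma> a b"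
      using B C gc by (intro bexI[OF _ in_ls[OF C(1)]]) (simp add: carrier_mult)
  qed
  have lr: "res_in_closure \<sigma> s (right_span ?g)" if "res_in_closure \<sigma> s (left_span ?g)"
  proof (rule cl_transfer[OF ex s that])
    fix a assume "a \<in> left_span ?g"
    then obtain B where B: "B \<in> fa_carrier" "a = fa_mult B ?g" using ls_char gc by blast
    obtain C where C: "C \<in> fa_carrier" "eqv \<sigma> (fa_mult B ?g) (fa_mult ?g C)" using conv_LR[OF l B(1)] by blast
    show "\<exists>b\<in>right_span ?g. a \<in> fa_carrier \<and> b \<in> fa_carrier \<and> eqv \<sigma> a b"
      using B C gc by (intro bexI[OF _ in_rs[OF C(1)]]) (simp add: carrier_mult)
  qed
  have lt: "res_in_closure \<sigma> s (two_sided_span ?g)" if "res_in_closure \<sigma> s (left_span ?g)"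
  proof (rule cl_transfer[OF ex s that])
    fix a assume "a \<in> left_span ?g"
    then obtain B where B: "B \<in> fa_carrier" "a = fa_mult B ?g" using ls_char gc by blast
    have "fa_mult (fa_mult B ?g) fa_unit \<in> two_sided_span ?g" using B(1) carrier_unit by (rule in_ts)
    then show "\<exists>b\<in>two_sided_span ?g. a \<in> fa_carrier \<and> b \<in> fa_carrier \<and> eqv \<sigma> a b"
      using B gc by (intro bexI) (simp_all add: fa_mult_unit_right eqv_refl carrier_mult)
  qed
  have tl: "res_in_closure \<sigma> s (left_span ?g)" if "res_in_closure \<sigma> s (two_sided_span ?g)"
  proof (rule cl_transfer[OF ex s that])
    fix a assume a: "a \<in> two_sided_span ?g"
    obtain B where B: "B \<in> fa_carrier" "eqv \<sigma> a (fa_mult B ?g)" using ts_char[OF l a] by blast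
    have ac: "a \<in> fa_carrier" using a unfolding two_sided_span_def
      by (rule span_carrier[rotated]) (use gc in \<open>blast intro: carrier_mult\<close>)
    show "\<exists>b\<in>left_span ?g. a \<in> fa_carrier \<and> b \<in> fa_carrier \<and> eqv \<sigma> a b"
      using B gc ac by (intro bexI[OF _ in_ls[OF B(1)]]) (simp add: carrier_mult)
  qed
  show ?thesis using rl lr lt tl by blast
qed

lemma Q_chi: "x \<in> fa_carrier \<Longrightarrow> Qf chi x = (cmod (chi x))^2"
proof -
  assume x: "x \<in> fa_carrier"
  have "chi (fa_mult (fa_star x) x) = complex_of_real ((cmod (chi x))^2)"
    using x by (simp add: chi_mult chi_star carrier_intros)
      (metis complex_norm_square mult.commute of_real_power)
  then show ?thesis unfolding Qf_def Bf_def by simp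
qed

lemma chi_ts: assumes "f \<noteq> 0" "l \<noteq> 0" "a \<in> two_sided_span (fa_gen l f)" shows "chi a = 0"
  using assms(3) unfolding two_sided_span_def
proof (induct a rule: fa_span.induct)
  case span_zero then show ?case by (rule chi_zero)
next
  case (span_step a p c)
  then obtain B C where a: "a = fa_mult (fa_mult B (fa_gen l f)) C" "B \<in> fa_carrier" "C \<in> fa_carrier" by blast
  have gc: "fa_gen l f \<in> fa_carrier" using assms(2) by (rule carrier_gen)
  have pc: "p \<in> fa_carrier" using span_step(2)
    by (rule span_carrier[rotated]) (use gc in \<open>blast intro: carrier_mult\<close>)
  have "chi a = 0" using a gc assms(1) by (simp add: chi_mult chi_gen carrier_mult)
  then show ?case using span_step(3) a gc pc by (simp add: chi_add chi_scale carrier_intros)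
qed

lemma proper:
  assumes sy: "symplectic_form \<sigma>" and l: "l \<noteq> 0" and f: "f \<noteq> 0"
  shows "\<exists>s. res_cauchy \<sigma> s \<and> \<not> res_in_closure \<sigma> s (two_sided_span (fa_gen l f))"
proof (intro exI conjI)
  have ex: "\<exists>\<omega>. resolvent_state \<sigma> \<omega>" using states_ex[OF sy] .
  have z: "fa_diff fa_unit fa_unit = fa_zero" unfolding fa_diff_def fa_zero_def by simp
  show "res_cauchy \<sigma> (\<lambda>n. fa_unit)"
    unfolding res_cauchy_def z using N_zero[OF ex] carrier_unit by auto
  show "\<not> res_in_closure \<sigma> (\<lambda>n. fa_unit) (two_sided_span (fa_gen l f))"
  proof
    assume "res_in_closure \<sigma> (\<lambda>n. fa_unit) (two_sided_span (fa_gen l f))"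
    then obtain a and M :: nat where a: "a \<in> two_sided_span (fa_gen l f)" "\<forall>n\<ge>M. Nn \<sigma> (fa_diff fa_unit a) < 1"
      unfolding res_in_closure_def by (metis zero_less_one)
    have gc: "fa_gen l f \<in> fa_carrier" using l by (rule carrier_gen)
    have ac: "a \<in> fa_carrier" using a(1) unfolding two_sided_span_def
      by (rule span_carrier[rotated]) (use gc in \<open>blast intro: carrier_mult\<close>)
    have dc: "fa_diff fa_unit a \<in> fa_carrier" using ac by (simp add: carrier_intros)
    have "chi (fa_diff fa_unit a) = 1" using chi_ts[OF f l a(1)] ac by (simp add: chi_diff chi_unit carrier_unit)
    then have "Qf chi (fa_diff fa_unit a) = 1" using Q_chi[OF dc] by simp
    then have "1 \<le> Nn \<sigma> (fa_diff fa_unit a)" using N_ge[OF dc chi_state[OF sy]] by simp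
    then show False using a(2) by auto
  qed
qed



lemma gv_eqv: assumes l: "l \<noteq> 0" and m: "m \<noteq> 0" and lm: "m \<noteq> l"
  shows "eqv \<sigma> (fa_mult (fa_gen l f) (fa_diff fa_unit (fa_scale (\<i> * complex_of_real m) (fa_gen m f))))
     (fa_scale (complex_of_real (1 / (m - l))) (fa_diff (fa_scale (complex_of_real m) (fa_gen m f)) (fa_scale (complex_of_real l) (fa_gen l f))))"
proof (rule eqv_of_scaled_rel[OF rel3_mem[OF l m, of f \<sigma>], of _ _ "complex_of_real (m / (m - l))"])
  have d: "complex_of_real m - complex_of_real l \<noteq> 0" using lm by (metis of_real_diff of_real_eq_0_iff right_minus_eq)
  show "fa_diff (fa_mult (fa_gen l f) (fa_diff fa_unit (fa_scale (\<i> * complex_of_real m) (fa_gen m f))))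
     (fa_scale (complex_of_real (1 / (m - l))) (fa_diff (fa_scale (complex_of_real m) (fa_gen m f)) (fa_scale (complex_of_real l) (fa_gen l f)))) =
    fa_scale (complex_of_real (m / (m - l)))
     (fa_diff (fa_diff (fa_gen l f) (fa_gen m f)) (fa_scale (\<i> * complex_of_real (m - l)) (fa_mult (fa_gen l f) (fa_gen m f))))"
    by (simp only: fa_mult_diff_right fa_mult_scale_right fa_mult_unit_right)
       (simp add: fa_diff_def fa_scale_def, rule fa_ext, use d in \<open>simp add: field_simps\<close>)
qed

lemma Rm_eqv: assumes l: "l \<noteq> 0" and m: "m \<noteq> 0"
  shows "eqv \<sigma> (fa_gen m f) (fa_mult (fa_gen l f) (fa_diff fa_unit (fa_scale (\<i> * complex_of_real (m - l)) (fa_gen m f))))"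
proof (rule eqv_of_scaled_rel[OF rel3_mem[OF l m, of f \<sigma>], of _ _ "-1"])
  show "fa_diff (fa_gen m f) (fa_mult (fa_gen l f) (fa_diff fa_unit (fa_scale (\<i> * complex_of_real (m - l)) (fa_gen m f)))) =
    fa_scale (-1) (fa_diff (fa_diff (fa_gen l f) (fa_gen m f)) (fa_scale (\<i> * complex_of_real (m - l)) (fa_mult (fa_gen l f) (fa_gen m f))))"
    by (simp only: fa_mult_diff_right fa_mult_scale_right fa_mult_unit_right)
       (simp add: fa_diff_def fa_scale_def, rule fa_ext, simp add: algebra_simps)
qed

lemma analytic:
  assumes ex: "\<exists>\<omega>. resolvent_state \<sigma> \<omega>" and s: "\<forall>n. s n \<in> fa_carrier" and P: "P \<in> fa_carrier"
    and l: "l \<noteq> 0"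
    and clP: "res_in_closure \<sigma> s (right_span P)"
    and clg: "res_in_closure \<sigma> s (left_span (fa_gen l f))"
  shows "res_in_closure \<sigma> s (right_span (fa_mult P (fa_gen l f)))"
  unfolding res_in_closure_def
proof (intro allI impI)
  fix e :: real assume e: "e > 0"
  let ?g = "fa_gen l f"
  have gc: "?g \<in> fa_carrier" using l by (rule carrier_gen)
  obtain a1 and M1 :: nat where a1: "a1 \<in> left_span ?g" "\<forall>n\<ge>M1. Nn \<sigma> (fa_diff (s n) a1) < e/6"
    using clg e unfolding res_in_closure_def by (metis divide_pos_pos zero_less_numeral)
  obtain b where b: "b \<in> fa_carrier" "a1 = fa_mult b ?g" using ls_char[OF gc a1(1)] by blast
  obtain a2 and M2 :: nat where a2: "a2 \<in> right_span P" "\<forall>n\<ge>M2. Nn \<sigma> (fa_diff (s n) a2) < e/3"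
    using clP e unfolding res_in_closure_def by (metis divide_pos_pos zero_less_numeral)
  obtain a where a: "a \<in> fa_carrier" "a2 = fa_mult P a" using rs_char[OF P a2(1)] by blast
  define K where "K = 6 * (Nn \<sigma> b + 1) / e"
  have Nb: "0 \<le> Nn \<sigma> b" using N_nonneg[OF ex b(1)] .
  have K: "K > 0" unfolding K_def using Nb e by simp
  define m where "m = \<bar>l\<bar> + K + 1"
  have m0: "m > 0" and ml: "m - l \<ge> K + 1" unfolding m_def using K by auto
  have mne: "m \<noteq> 0" "m \<noteq> l" using m0 ml K by auto
  let ?h = "fa_gen m f"
  have hc: "?h \<in> fa_carrier" using mne(1) by (rule carrier_gen)
  define u where "u = fa_scale (\<i> * complex_of_real m) ?h"
  define v where "v = fa_diff fa_unit u"
  have uc: "u \<in> fa_carrier" and vc: "v \<in> fa_carrier" unfolding u_def v_def using hc by (simp_all add: carrier_intros)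
  have Nu: "Nn \<sigma> u \<le> 1"
  proof -
    have "Nn \<sigma> u \<le> cmod (\<i> * complex_of_real m) * Nn \<sigma> ?h" unfolding u_def by (rule N_scale[OF ex hc])
    also have "\<dots> \<le> m * (1 / m)"
      using N_gen[OF ex mne(1), of f] m0 by (simp add: norm_mult le_divide_eq mult.commute)
    finally show ?thesis using m0 by simp
  qed
  have Nv: "Nn \<sigma> v \<le> 2"
    unfolding v_def using N_diff[OF ex carrier_unit uc] N_unit[OF ex] Nu by simp
  define W where "W = fa_scale (complex_of_real (1 / (m - l))) (fa_diff (fa_scale (complex_of_real m) ?h) (fa_scale (complex_of_real l) ?g))"
  have Wc: "W \<in> fa_carrier" unfolding W_def using hc gc by (simp add: carrier_intros)
  have gvW: "Nn \<sigma> (fa_mult ?g v) = Nn \<sigma> W"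
    unfolding v_def u_def W_def using gc vc hc
    by (intro N_eqv gv_eqv l mne) (simp_all add: carrier_intros v_def u_def)
  have NW: "Nn \<sigma> W \<le> 2 / (m - l)"
  proof -
    have "Nn \<sigma> W \<le> cmod (complex_of_real (1 / (m - l))) * Nn \<sigma> (fa_diff (fa_scale (complex_of_real m) ?h) (fa_scale (complex_of_real l) ?g))"
      unfolding W_def using hc gc by (intro N_scale[OF ex]) (simp add: carrier_intros)
    also have "\<dots> \<le> (1 / (m - l)) * (cmod (complex_of_real m) * Nn \<sigma> ?h + cmod (complex_of_real l) * Nn \<sigma> ?g)"
    proof (rule mult_mono)
      show "cmod (complex_of_real (1 / (m - l))) \<le> 1 / (m - l)" unfolding norm_of_real using ml K by simp
      show "Nn \<sigma> (fa_diff (fa_scale (complex_of_real m) ?h) (fa_scale (complex_of_real l) ?g))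
         \<le> cmod (complex_of_real m) * Nn \<sigma> ?h + cmod (complex_of_real l) * Nn \<sigma> ?g"
        using N_diff[OF ex carrier_scale[OF hc, of "complex_of_real m"] carrier_scale[OF gc, of "complex_of_real l"]] N_scale[OF ex hc, of "complex_of_real m"]
          N_scale[OF ex gc, of "complex_of_real l"] by linarith
    qed (use ml K N_nonneg[OF ex carrier_diff[OF carrier_scale[OF hc] carrier_scale[OF gc]]] in auto)
    also have "\<dots> \<le> (1 / (m - l)) * 2"
    proof (rule mult_left_mono)
      have "cmod (complex_of_real m) * Nn \<sigma> ?h \<le> 1"
        using N_gen[OF ex mne(1), of f] m0 unfolding norm_of_real by (simp add: le_divide_eq mult.commute)
      moreover have "cmod (complex_of_real l) * Nn \<sigma> ?g \<le> 1"
        using N_gen[OF ex l, of f] l unfolding norm_of_real by (simp add: le_divide_eq mult.commute)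
      ultimately show "cmod (complex_of_real m) * Nn \<sigma> ?h + cmod (complex_of_real l) * Nn \<sigma> ?g \<le> 2" by simp
    qed (use ml K in auto)
    finally show ?thesis by simp
  qed
  have bgv: "Nn \<sigma> (fa_mult b (fa_mult ?g v)) < e / 3"
  proof -
    have "Nn \<sigma> (fa_mult b (fa_mult ?g v)) \<le> Nn \<sigma> b * Nn \<sigma> (fa_mult ?g v)"
      using N_mult[OF ex b(1)] gc vc carrier_mult by blast
    also have "\<dots> \<le> Nn \<sigma> b * (2 / (m - l))" unfolding gvW using NW Nb by (rule mult_left_mono)
    also have "\<dots> < e / 3"
    proof -
      have "Nn \<sigma> b * (2 / (m - l)) \<le> Nn \<sigma> b * (2 / K)"
        using Nb K ml by (intro mult_left_mono divide_left_mono) auto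
      also have "\<dots> = Nn \<sigma> b * e / (3 * (Nn \<sigma> b + 1))" unfolding K_def using e Nb by (simp add: field_simps)
      also have "\<dots> < e / 3" using Nb e by (simp add: field_simps)
      finally show ?thesis .
    qed
    finally show ?thesis .
  qed
  obtain c1 where c1: "c1 \<in> fa_carrier" "eqv \<sigma> (fa_mult a ?h) (fa_mult ?h c1)" using conv_LR[OF mne(1) a(1)] by blast
  define T where "T = fa_diff fa_unit (fa_scale (\<i> * complex_of_real (m - l)) ?h)"
  have Tc: "T \<in> fa_carrier" unfolding T_def using hc by (simp add: carrier_intros)
  define c where "c = fa_scale (\<i> * complex_of_real m) (fa_mult T c1)"
  have cc: "c \<in> fa_carrier" unfolding c_def using Tc c1 by (simp add: carrier_intros)
  have au: "eqv \<sigma> (fa_mult a u) (fa_mult ?g c)"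
  proof -
    have "eqv \<sigma> (fa_mult a u) (fa_scale (\<i> * complex_of_real m) (fa_mult ?h c1))"
      unfolding u_def fa_mult_scale_right by (rule eqv_scale[OF c1(2)])
    moreover have "eqv \<sigma> (fa_mult ?h c1) (fa_mult (fa_mult ?g T) c1)"
      unfolding T_def by (rule eqv_mult_right[OF Rm_eqv[OF l mne(1)] c1(1)])
    ultimately show ?thesis unfolding c_def
      by (metis eqv_scale eqv_trans fa_mult_assoc fa_mult_scale_right)
  qed
  define z where "z = fa_mult (fa_mult P (fa_gen l f)) c"
  have zin: "z \<in> right_span (fa_mult P ?g)" unfolding z_def using cc by (rule in_rs)
  have Pau: "eqv \<sigma> (fa_mult (fa_mult P a) u) z"
    unfolding z_def fa_mult_assoc using eqv_mult_left[OF au P] .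
  have "\<forall>n\<ge>max M1 M2. Nn \<sigma> (fa_diff (s n) z) < e"
  proof (intro allI impI)
    fix n :: nat assume n: "n \<ge> max M1 M2"
    have sn: "s n \<in> fa_carrier" using s by blast
    have e1: "Nn \<sigma> (fa_diff (s n) (fa_mult b ?g)) < e/6" using a1(2) b(2) n by auto
    have e2: "Nn \<sigma> (fa_diff (s n) (fa_mult P a)) < e/3" using a2(2) a(2) n by auto
    have PA: "fa_mult P a \<in> fa_carrier" using P a(1) by (rule carrier_mult)
    have bg: "fa_mult b ?g \<in> fa_carrier" using b(1) gc by (rule carrier_mult)
    have split: "fa_diff (s n) (fa_mult (fa_mult P a) u) =
       fa_add (fa_add (fa_mult (fa_diff (s n) (fa_mult b ?g)) v) (fa_mult b (fa_mult ?g v)))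
              (fa_mult (fa_diff (s n) (fa_mult P a)) u)"
      unfolding v_def
      by (simp only: fa_mult_diff_left fa_mult_diff_right fa_mult_unit_right fa_mult_assoc)
         (simp add: fa_diff_def fa_add_def)
    have "Nn \<sigma> (fa_diff (s n) z) = Nn \<sigma> (fa_diff (s n) (fa_mult (fa_mult P a) u))"
    proof (rule N_eqv)
      show "eqv \<sigma> (fa_diff (s n) z) (fa_diff (s n) (fa_mult (fa_mult P a) u))"
        by (rule eqv_diff[OF eqv_refl eqv_sym[OF Pau]])
      show "fa_diff (s n) z \<in> fa_carrier" unfolding z_def
        by (rule carrier_diff[OF sn carrier_mult[OF carrier_mult[OF P gc] cc]])
      show "fa_diff (s n) (fa_mult (fa_mult P a) u) \<in> fa_carrier"
        by (rule carrier_diff[OF sn carrier_mult[OF PA uc]])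
    qed
    also have "\<dots> \<le> Nn \<sigma> (fa_mult (fa_diff (s n) (fa_mult b ?g)) v) + Nn \<sigma> (fa_mult b (fa_mult ?g v))
        + Nn \<sigma> (fa_mult (fa_diff (s n) (fa_mult P a)) u)"
      unfolding split using sn bg vc b gc PA uc
      by (intro order_trans[OF N_add[OF ex]] add_mono order_trans[OF N_add[OF ex]]) (simp_all add: carrier_intros)
    also have "\<dots> < e/6 * 2 + e/3 + e/3 * 1"
    proof -
      have A: "Nn \<sigma> (fa_mult (fa_diff (s n) (fa_mult b ?g)) v) \<le> e/6 * 2"
        using N_mult[OF ex carrier_diff[OF sn bg] vc] e1 Nv N_nonneg[OF ex carrier_diff[OF sn bg]]
          N_nonneg[OF ex vc]
        by (meson less_imp_le mult_mono order_trans)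
      have B: "Nn \<sigma> (fa_mult (fa_diff (s n) (fa_mult P a)) u) < e/3 * 1"
      proof -
        have "Nn \<sigma> (fa_mult (fa_diff (s n) (fa_mult P a)) u) \<le> Nn \<sigma> (fa_diff (s n) (fa_mult P a)) * Nn \<sigma> u"
          using N_mult[OF ex carrier_diff[OF sn PA] uc] .
        also have "\<dots> \<le> Nn \<sigma> (fa_diff (s n) (fa_mult P a)) * 1"
          using Nu N_nonneg[OF ex carrier_diff[OF sn PA]] by (rule mult_left_mono)
        finally show ?thesis using e2 by simp
      qed
      show ?thesis using A B bgv by linarith
    qed
    also have "\<dots> = e" by simp
    finally show "Nn \<sigma> (fa_diff (s n) z) < e" .
  qed
  then show "\<exists>a\<in>right_span (fa_mult P ?g). \<exists>M. \<forall>n\<ge>M. Nn \<sigma> (fa_diff (s n) a) < e" using zin by blast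
qed



lemma foldr_mult: "foldr fa_mult xs z = fa_mult (foldr fa_mult xs fa_unit) z"
  by (induct xs) (simp_all add: fa_mult_unit_left fa_mult_assoc)

lemma fa_prod_snoc: "fa_prod (xs @ [x]) = fa_mult (fa_prod xs) x"
  unfolding fa_prod_def by (simp add: fa_mult_unit_right foldr_mult[of xs x])

lemma fa_prod_carrier: "(\<forall>x\<in>set xs. x \<in> fa_carrier) \<Longrightarrow> fa_prod xs \<in> fa_carrier"
  unfolding fa_prod_def by (induct xs) (simp_all add: carrier_unit carrier_mult)

lemma part2_gen:
  assumes ex: "\<exists>\<omega>. resolvent_state \<sigma> \<omega>" and s: "\<forall>n. s n \<in> fa_carrier"
  shows "xs \<noteq> [] \<Longrightarrow> (\<forall>x\<in>set xs. fst x \<noteq> 0) \<Longrightarrow>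
    (\<forall>x\<in>set xs. res_in_closure \<sigma> s (right_span (fa_gen (fst x) (snd x)))) \<longleftrightarrow>
    res_in_closure \<sigma> s (right_span (fa_prod (map (\<lambda>(l, f). fa_gen l f) xs)))"
proof (induct xs rule: rev_induct)
  case Nil then show ?case by simp
next
  case (snoc x xs)
  let ?g = "fa_gen (fst x) (snd x)"
  have lx: "fst x \<noteq> 0" using snoc by simp
  have gc: "?g \<in> fa_carrier" using lx by (rule carrier_gen)
  have e: "(\<lambda>(l, f). fa_gen l f) x = ?g" by (cases x) simp
  show ?case
  proof (cases "xs = []")
    case True
    then show ?thesis by (simp add: fa_prod_def fa_mult_unit_right e)
  next
    case False
    let ?P = "fa_prod (map (\<lambda>(l, f). fa_gen l f) xs)"
    have Pc: "?P \<in> fa_carrier" using snoc(3)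
      by (intro fa_prod_carrier) (force intro: carrier_gen)
    have IH: "(\<forall>x\<in>set xs. res_in_closure \<sigma> s (right_span (fa_gen (fst x) (snd x)))) \<longleftrightarrow>
      res_in_closure \<sigma> s (right_span ?P)" using snoc False by simp
    have pe: "fa_prod (map (\<lambda>(l, f). fa_gen l f) (xs @ [x])) = fa_mult ?P ?g"
      by (simp add: fa_prod_snoc e)
    have fw: "res_in_closure \<sigma> s (right_span (fa_mult ?P ?g))"
      if "res_in_closure \<sigma> s (right_span ?P)" "res_in_closure \<sigma> s (right_span ?g)"
    proof (rule analytic[OF ex s Pc lx that(1)])
      show "res_in_closure \<sigma> s (left_span ?g)" using part1[OF ex s lx] that(2) by blast
    qed
    have bw1: "res_in_closure \<sigma> s (right_span ?P)" if "res_in_closure \<sigma> s (right_span (fa_mult ?P ?g))"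
    proof (rule cl_transfer[OF ex s that])
      fix a assume "a \<in> right_span (fa_mult ?P ?g)"
      then obtain B where B: "B \<in> fa_carrier" "a = fa_mult (fa_mult ?P ?g) B" using rs_char Pc gc carrier_mult by blast
      have "a = fa_mult ?P (fa_mult ?g B)" using B by (simp add: fa_mult_assoc)
      moreover have "fa_mult ?g B \<in> fa_carrier" using gc B(1) by (rule carrier_mult)
      ultimately show "\<exists>b\<in>right_span ?P. a \<in> fa_carrier \<and> b \<in> fa_carrier \<and> eqv \<sigma> a b"
        using Pc by (intro bexI[OF _ in_rs]) (auto simp: eqv_refl carrier_mult)
    qed
    have bw2: "res_in_closure \<sigma> s (right_span ?g)" if "res_in_closure \<sigma> s (right_span (fa_mult ?P ?g))"
    proof (rule cl_transfer[OF ex s that])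
      fix a assume "a \<in> right_span (fa_mult ?P ?g)"
      then obtain B where B: "B \<in> fa_carrier" "a = fa_mult (fa_mult ?P ?g) B" using rs_char Pc gc carrier_mult by blast
      obtain C where C: "C \<in> fa_carrier" "eqv \<sigma> (fa_mult ?P ?g) (fa_mult ?g C)" using conv_LR[OF lx Pc] by blast
      have "eqv \<sigma> a (fa_mult ?g (fa_mult C B))"
        using eqv_mult_right[OF C(2) B(1)] B(2) by (simp add: fa_mult_assoc)
      moreover have "fa_mult C B \<in> fa_carrier" using C(1) B(1) by (rule carrier_mult)
      moreover have "a \<in> fa_carrier" using B Pc gc by (simp add: carrier_mult)
      ultimately show "\<exists>b\<in>right_span ?g. a \<in> fa_carrier \<and> b \<in> fa_carrier \<and> eqv \<sigma> a b"
        using gc by (intro bexI[OF _ in_rs]) (auto simp: carrier_mult)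
    qed
    show ?thesis unfolding pe using IH fw bw1 bw2 by auto
  qed
qed

theorem theorem3p8:
  fixes \<sigma> :: "'a::real_vector \<Rightarrow> 'a \<Rightarrow> real"
  assumes "symplectic_form \<sigma>"
  shows
    "(\<forall>l f. l \<noteq> 0 \<longrightarrow> f \<noteq> 0 \<longrightarrow>
        (\<forall>s. res_cauchy \<sigma> s \<longrightarrow>
           (res_in_closure \<sigma> s (right_span (fa_gen l f)) \<longleftrightarrow>
              res_in_closure \<sigma> s (left_span (fa_gen l f))) \<and>
           (res_in_closure \<sigma> s (left_span (fa_gen l f)) \<longleftrightarrow>
              res_in_closure \<sigma> s (two_sided_span (fa_gen l f)))) \<and>
        (\<exists>s. res_cauchy \<sigma> s \<and> \<not> res_in_closure \<sigma> s (two_sided_span (fa_gen l f))))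
     \<and>
     (\<forall>(ls :: real list) (fs :: 'a list).
        fs \<noteq> [] \<longrightarrow> length ls = length fs \<longrightarrow> distinct fs \<longrightarrow>
        (\<forall>f\<in>set fs. f \<noteq> 0) \<longrightarrow> (\<forall>l\<in>set ls. l \<noteq> 0) \<longrightarrow>
        (\<forall>s. res_cauchy \<sigma> s \<longrightarrow>
           ((\<forall>i<length fs. res_in_closure \<sigma> s (right_span (fa_gen (ls ! i) (fs ! i)))) \<longleftrightarrow>
            res_in_closure \<sigma> s
              (right_span (fa_prod (map (\<lambda>(l, f). fa_gen l f) (zip ls fs)))))))"
proof (intro conjI allI impI)
  have ex: "\<exists>\<omega>. resolvent_state \<sigma> \<omega>" using states_ex[OF assms] .
  fix l :: real and f :: 'a assume l: "l \<noteq> 0" and f: "f \<noteq> 0"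
  {
    fix s assume "res_cauchy \<sigma> s"
    then have s: "\<forall>n. s n \<in> fa_carrier" unfolding res_cauchy_def by blast
    show "res_in_closure \<sigma> s (right_span (fa_gen l f)) \<longleftrightarrow> res_in_closure \<sigma> s (left_span (fa_gen l f))"
      using part1[OF ex s l] by blast
    show "res_in_closure \<sigma> s (left_span (fa_gen l f)) \<longleftrightarrow> res_in_closure \<sigma> s (two_sided_span (fa_gen l f))"
      using part1[OF ex s l] by blast
  }
  show "\<exists>s. res_cauchy \<sigma> s \<and> \<not> res_in_closure \<sigma> s (two_sided_span (fa_gen l f))"
    using proper[OF assms l f] .
next
  have ex: "\<exists>\<omega>. resolvent_state \<sigma> \<omega>" using states_ex[OF assms] .
  fix ls :: "real list" and fs :: "'a list" and s
  assume ne: "fs \<noteq> []" and len: "length ls = length fs" and ln: "\<forall>l\<in>set ls. l \<noteq> 0"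
    and cs: "res_cauchy \<sigma> s"
  have s: "\<forall>n. s n \<in> fa_carrier" using cs unfolding res_cauchy_def by blast
  let ?xs = "zip ls fs"
  have xne: "?xs \<noteq> []" using ne len by (cases ls; cases fs) auto
  have xl: "\<forall>x\<in>set ?xs. fst x \<noteq> 0" using ln by (auto dest: set_zip_leftD)
  have "(\<forall>i<length fs. res_in_closure \<sigma> s (right_span (fa_gen (ls ! i) (fs ! i)))) \<longleftrightarrow>
        (\<forall>x\<in>set ?xs. res_in_closure \<sigma> s (right_span (fa_gen (fst x) (snd x))))"
    using len by (auto simp: set_zip)
  also have "\<dots> \<longleftrightarrow> res_in_closure \<sigma> s (right_span (fa_prod (map (\<lambda>(l, f). fa_gen l f) ?xs)))"
    by (rule part2_gen[OF ex s xne xl])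
  finally show "(\<forall>i<length fs. res_in_closure \<sigma> s (right_span (fa_gen (ls ! i) (fs ! i)))) \<longleftrightarrow>
            res_in_closure \<sigma> s (right_span (fa_prod (map (\<lambda>(l, f). fa_gen l f) (zip ls fs))))" .
qed


end
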